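(* Let $I$ (inputs) and $O$ (outputs) be disjoint finite sets and let $\Phi_{\mathrm{CTL}^*}$ be a CTL* state formula in positive normal form over $I$ and $O$. Let $F_{\mathit{exist}}$ (resp. $F_{\mathit{univ}}$) be the set of subformulas of $\Phi_{\mathrm{CTL}^*}$ of the form $\mathsf E\varphi$ (resp. $\mathsf A\varphi$). For each $\mathsf E\varphi\in F_{\mathit{exist}}$ fix a nondeterministic B\"uchi word automaton for $\varphi$ (where state subformulas of $\varphi$ are treated as atomic propositions) with state set $Q_\varphi$, and let $k=\sum_{\mathsf E\varphi\in F_{\mathit{exist}}}|Q_\varphi|$. Introduce new outputs: for each $\mathsf E\varphi\in F_{\mathit{exist}}$ an output $v_{\mathsf E\varphi}$ ranging over $\{0,\dots,k\}$; for each $\mathsf A\varphi\in F_{\mathit{univ}}$ a Boolean output $p_{\mathsf A\varphi}$; and for each $j\in\{1,\dots,k\}$ an output $d_j$ ranging over $2^I$, where the proposition $d_j$ holds at a position iff the current input equals the current value of $d_j$. For a formula $\psi$ let $\psi'$ be obtained by replacing every maximal subformula $\mathsf E\chi$ by $v_{\mathsf E\chi}\neq0$ and every maximal subformula $\mathsf A\chi$ by $p_{\mathsf A\chi}$. Define the LTL formula $$\Phi_{\mathrm{LTL}}=\Phi'_{\mathrm{CTL}^*}\wedge\bigwedge_{\mathsf E\varphi\in F_{\mathit{exist}}}\ \bigwedge_{j=1}^{k}\mathsf G\big[v_{\mathsf E\varphi}=j\rightarrow(\mathsf G d_j\rightarrow\varphi')\big]\wedge\bigwedge_{\mathsf A\varphi\in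 F_{\mathit{univ}}}\mathsf G\big[p_{\mathsf A\varphi}\rightarrow\varphi'\big].$$ Then $\Phi_{\mathrm{CTL}^*}$ is realisable (with inputs $I$ and outputs $O$) if and only if $\Phi_{\mathrm{LTL}}$ is realisable (with inputs $I$ and outputs $O$ together with all new outputs).
   Context: A Moore system $(I,O,T,t_0,\tau,\mathit{out})$ has finite states $T$, initial state $t_0$, total transition function $\tau:T\times 2^I\to T$ and output labelling $\mathit{out}:T\to 2^O$. Its computations are words $(\mathit{out}(t_1)\cup e_1)(\mathit{out}(t_2)\cup e_2)\dots$ with $t_1=t_0$, $e_j\in 2^I$, $t_{j+1}=\tau(t_j,e_j)$; its computation tree has nodes $(2^I)^*$ with node $w$ labelled $\mathit{out}(\tau(t_0,w))$. A specification is realisable if some Moore system with the given inputs and outputs satisfies it: for an LTL formula, all computations satisfy it; for a CTL* formula, its computation tree satisfies it at the root. CTL* with inputs in positive normal form: state formulas are $\mathit{true},\mathit{false}$, outputs and negated outputs, $\wedge,\vee$ of state formulas, and $\mathsf A\varphi,\mathsf E\varphi$; path formulas are state formulas, inputs and negated inputs, $\wedge,\vee,\mathsf X,\mathsf U,\mathsf R$ of path formulas; on a tree path $n_1n_2\dots$ with $n_2=n_1\cdot e$ an input $i$ holds iff $i\in e$, and the rest of the semantics is standard. *)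

theory Defs
  imports Main
begin

text \<open>A single formula datatype; 'state formulas' are characterised by is_state.
  Out/NOut are (negated) outputs, In/NIn are (negated) inputs.\<close>
datatype 'a ctl =
    TT | FF
  | Out 'a | NOut 'a
  | In 'a | NIn 'a
  | And "'a ctl" "'a ctl" | Or "'a ctl" "'a ctl"
  | A "'a ctl" | E "'a ctl"
  | X "'a ctl" | U "'a ctl" "'a ctl" | R "'a ctl" "'a ctl"

primrec is_state :: "'a ctl \<Rightarrow> bool" where
  "is_state TT = True"
| "is_state FF = True"
| "is_state (Out a) = True"
| "is_state (NOut a) = True"
| "is_state (In a) = False"
| "is_state (NIn a) = False"
| "is_state (And f g) = (is_state f \<and> is_state g)"
| "is_state (Or f g) = (is_state f \<and> is_state g)"
| "is_state (A f) = True"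
| "is_state (E f) = True"
| "is_state (X f) = False"
| "is_state (U f g) = False"
| "is_state (R f g) = False"

primrec over :: "'a set \<Rightarrow> 'a set \<Rightarrow> 'a ctl \<Rightarrow> bool" where
  "over Ins Outs TT = True"
| "over Ins Outs FF = True"
| "over Ins Outs (Out a) = (a \<in> Outs)"
| "over Ins Outs (NOut a) = (a \<in> Outs)"
| "over Ins Outs (In a) = (a \<in> Ins)"
| "over Ins Outs (NIn a) = (a \<in> Ins)"
| "over Ins Outs (And f g) = (over Ins Outs f \<and> over Ins Outs g)"
| "over Ins Outs (Or f g) = (over Ins Outs f \<and> over Ins Outs g)"
| "over Ins Outs (A f) = over Ins Outs f"
| "over Ins Outs (E f) = over Ins Outs f"
| "over Ins Outs (X f) = over Ins Outs f"
| "over Ins Outs (U f g) = (over Ins Outs f \<and> over Ins Outs g)"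
| "over Ins Outs (R f g) = (over Ins Outs f \<and> over Ins Outs g)"

text \<open>Semantics on a tree with node labels L (nodes are lists of input sets).
  csem I L f w e: f holds on the path starting at node w that follows the inputs e 0, e 1, ...
  (i.e. the path w, w@[e 0], w@[e 0,e 1], ...).  For state formulas only w matters.\<close>
primrec csem :: "'a set \<Rightarrow> ('a set list \<Rightarrow> 'a set) \<Rightarrow> 'a ctl \<Rightarrow> 'a set list \<Rightarrow> (nat \<Rightarrow> 'a set) \<Rightarrow> bool" where
  "csem Ins L TT w e = True"
| "csem Ins L FF w e = False"
| "csem Ins L (Out a) w e = (a \<in> L w)"
| "csem Ins L (NOut a) w e = (a \<notin> L w)"
| "csem Ins L (In a) w e = (a \<in> e 0)"
| "csem Ins L (NIn a) w e = (a \<notin> e 0)"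
| "csem Ins L (And f g) w e = (csem Ins L f w e \<and> csem Ins L g w e)"
| "csem Ins L (Or f g) w e = (csem Ins L f w e \<or> csem Ins L g w e)"
| "csem Ins L (A f) w e = (\<forall>e'. (\<forall>j. e' j \<subseteq> Ins) \<longrightarrow> csem Ins L f w e')"
| "csem Ins L (E f) w e = (\<exists>e'. (\<forall>j. e' j \<subseteq> Ins) \<and> csem Ins L f w e')"
| "csem Ins L (X f) w e = csem Ins L f (w @ [e 0]) (\<lambda>j. e (Suc j))"
| "csem Ins L (U f g) w e =
     (\<exists>k. csem Ins L g (w @ map e [0..<k]) (\<lambda>j. e (j + k)) \<and>
          (\<forall>j<k. csem Ins L f (w @ map e [0..<j]) (\<lambda>i. e (i + j))))"
| "csem Ins L (R f g) w e =
     (\<forall>k. csem Ins L g (w @ map e [0..<k]) (\<lambda>j. e (j + k)) \<or>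
          (\<exists>j<k. csem Ins L f (w @ map e [0..<j]) (\<lambda>i. e (i + j))))"

definition moore :: "'a set \<Rightarrow> ('o \<Rightarrow> bool) \<Rightarrow> nat set \<Rightarrow> nat \<Rightarrow> (nat \<Rightarrow> 'a set \<Rightarrow> nat) \<Rightarrow> (nat \<Rightarrow> 'o) \<Rightarrow> bool" where
  "moore Ins okout T t0 tau out \<longleftrightarrow>
     finite T \<and> t0 \<in> T \<and> (\<forall>t\<in>T. \<forall>e. e \<subseteq> Ins \<longrightarrow> tau t e \<in> T) \<and> (\<forall>t\<in>T. okout (out t))"

definition reach :: "(nat \<Rightarrow> 'a set \<Rightarrow> nat) \<Rightarrow> nat \<Rightarrow> 'a set list \<Rightarrow> nat" where
  "reach tau t0 w = foldl tau t0 w"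

definition ctl_realisable :: "'a set \<Rightarrow> 'a set \<Rightarrow> 'a ctl \<Rightarrow> bool" where
  "ctl_realisable Ins Outs f \<longleftrightarrow>
     (\<exists>T t0 tau out. moore Ins (\<lambda>s. s \<subseteq> Outs) T t0 tau out \<and>
        csem Ins (\<lambda>w. out (reach tau t0 w)) f [] (\<lambda>_. {}))"

datatype 'p ltl =
    LTrue | LFalse | LAtom 'p | LNot "'p ltl"
  | LAnd "'p ltl" "'p ltl" | LOr "'p ltl" "'p ltl"
  | LX "'p ltl" | LU "'p ltl" "'p ltl" | LR "'p ltl" "'p ltl"

primrec lsem :: "('p \<Rightarrow> 'l \<Rightarrow> bool) \<Rightarrow> 'p ltl \<Rightarrow> (nat \<Rightarrow> 'l) \<Rightarrow> bool" where
  "lsem P LTrue w = True"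
| "lsem P LFalse w = False"
| "lsem P (LAtom p) w = P p (w 0)"
| "lsem P (LNot f) w = (\<not> lsem P f w)"
| "lsem P (LAnd f g) w = (lsem P f w \<and> lsem P g w)"
| "lsem P (LOr f g) w = (lsem P f w \<or> lsem P g w)"
| "lsem P (LX f) w = lsem P f (\<lambda>i. w (Suc i))"
| "lsem P (LU f g) w = (\<exists>k. lsem P g (\<lambda>i. w (i + k)) \<and> (\<forall>j<k. lsem P f (\<lambda>i. w (i + j))))"
| "lsem P (LR f g) w = (\<forall>k. lsem P g (\<lambda>i. w (i + k)) \<or> (\<exists>j<k. lsem P f (\<lambda>i. w (i + j))))"

definition LG :: "'p ltl \<Rightarrow> 'p ltl" where "LG f = LR LFalse f"
definition LImp :: "'p ltl \<Rightarrow> 'p ltl \<Rightarrow> 'p ltl" where "LImp f g = LOr (LNot f) g"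
definition LConj :: "'p ltl list \<Rightarrow> 'p ltl" where "LConj fs = foldr LAnd fs LTrue"

text \<open>Atomic propositions of the LTL formula: original outputs and inputs, and the new outputs:
  LV (E phi) j  means  v_{E phi} = j;  LP (A phi) means p_{A phi};  LD j means the proposition d_j,
  i.e. the current input equals the current value of d_j.\<close>
datatype 'a lprop = LOut 'a | LIn 'a | LV "'a ctl" nat | LP "'a ctl" | LD nat

text \<open>Extended output value: (original outputs, v, p, d).\<close>
type_synonym 'a xout = "'a set \<times> ('a ctl \<Rightarrow> nat) \<times> ('a ctl \<Rightarrow> bool) \<times> (nat \<Rightarrow> 'a set)"

fun lprop_sem :: "'a lprop \<Rightarrow> 'a xout \<times> 'a set \<Rightarrow> bool" where
  "lprop_sem (LOut a) ((S, v, p, d), e) = (a \<in> S)"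
| "lprop_sem (LIn a) ((S, v, p, d), e) = (a \<in> e)"
| "lprop_sem (LV f j) ((S, v, p, d), e) = (v f = j)"
| "lprop_sem (LP f) ((S, v, p, d), e) = p f"
| "lprop_sem (LD j) ((S, v, p, d), e) = (e = d j)"

definition xout_ok :: "'a set \<Rightarrow> 'a set \<Rightarrow> nat \<Rightarrow> 'a xout \<Rightarrow> bool" where
  "xout_ok Ins Outs k x \<longleftrightarrow> (case x of (S, v, p, d) \<Rightarrow> S \<subseteq> Outs \<and> (\<forall>f. v f \<le> k) \<and> (\<forall>j. d j \<subseteq> Ins))"

definition computation :: "(nat \<Rightarrow> 'a set \<Rightarrow> nat) \<Rightarrow> nat \<Rightarrow> (nat \<Rightarrow> 'o) \<Rightarrow> (nat \<Rightarrow> 'a set) \<Rightarrow> nat \<Rightarrow> 'o \<times> 'a set" where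
  "computation tau t0 out e j = (out (reach tau t0 (map e [0..<j])), e j)"

definition ltl_realisable :: "'a set \<Rightarrow> 'a set \<Rightarrow> nat \<Rightarrow> 'a lprop ltl \<Rightarrow> bool" where
  "ltl_realisable Ins Outs k f \<longleftrightarrow>
     (\<exists>T t0 tau out. moore Ins (xout_ok Ins Outs k) T t0 tau out \<and>
        (\<forall>e. (\<forall>j. e j \<subseteq> Ins) \<longrightarrow> lsem lprop_sem f (computation tau t0 out e)))"

primrec prime :: "'a ctl \<Rightarrow> 'a lprop ltl" where
  "prime TT = LTrue"
| "prime FF = LFalse"
| "prime (Out a) = LAtom (LOut a)"
| "prime (NOut a) = LNot (LAtom (LOut a))"
| "prime (In a) = LAtom (LIn a)"
| "prime (NIn a) = LNot (LAtom (LIn a))"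
| "prime (And f g) = LAnd (prime f) (prime g)"
| "prime (Or f g) = LOr (prime f) (prime g)"
| "prime (A f) = LAtom (LP (A f))"
| "prime (E f) = LNot (LAtom (LV (E f) 0))"
| "prime (X f) = LX (prime f)"
| "prime (U f g) = LU (prime f) (prime g)"
| "prime (R f g) = LR (prime f) (prime g)"

primrec subfs :: "'a ctl \<Rightarrow> 'a ctl list" where
  "subfs TT = [TT]"
| "subfs FF = [FF]"
| "subfs (Out a) = [Out a]"
| "subfs (NOut a) = [NOut a]"
| "subfs (In a) = [In a]"
| "subfs (NIn a) = [NIn a]"
| "subfs (And f g) = And f g # subfs f @ subfs g"
| "subfs (Or f g) = Or f g # subfs f @ subfs g"
| "subfs (A f) = A f # subfs f"
| "subfs (E f) = E f # subfs f"
| "subfs (X f) = X f # subfs f"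
| "subfs (U f g) = U f g # subfs f @ subfs g"
| "subfs (R f g) = R f g # subfs f @ subfs g"

definition is_E :: "'a ctl \<Rightarrow> bool" where "is_E f \<longleftrightarrow> (\<exists>g. f = E g)"
definition is_A :: "'a ctl \<Rightarrow> bool" where "is_A f \<longleftrightarrow> (\<exists>g. f = A g)"

primrec body :: "'a ctl \<Rightarrow> 'a ctl" where
  "body (E f) = f" | "body (A f) = f"
| "body TT = TT" | "body FF = FF" | "body (Out a) = Out a" | "body (NOut a) = NOut a"
| "body (In a) = In a" | "body (NIn a) = NIn a" | "body (And f g) = And f g"
| "body (Or f g) = Or f g" | "body (X f) = X f" | "body (U f g) = U f g" | "body (R f g) = R f g"

definition F_exist :: "'a ctl \<Rightarrow> 'a ctl list" where "F_exist F = filter is_E (subfs F)"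
definition F_univ :: "'a ctl \<Rightarrow> 'a ctl list" where "F_univ F = filter is_A (subfs F)"

definition Phi_LTL :: "nat \<Rightarrow> 'a ctl \<Rightarrow> 'a lprop ltl" where
  "Phi_LTL k F =
     LAnd (prime F)
      (LAnd (LConj (concat (map (\<lambda>Ef. map (\<lambda>j.
                LG (LImp (LAtom (LV Ef j)) (LImp (LG (LAtom (LD j))) (prime (body Ef))))) [1..<Suc k])
              (F_exist F))))
            (LConj (map (\<lambda>Af. LG (LImp (LAtom (LP Af)) (prime (body Af)))) (F_univ F))))"

record ('s, 'c) nba =
  states :: "'s set"
  init :: "'s set"
  trans :: "'s \<Rightarrow> 'c \<Rightarrow> 's set"
  accepting :: "'s set"

definition nba_wf :: "('s, 'c) nba \<Rightarrow> bool" where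
  "nba_wf B \<longleftrightarrow> finite (states B) \<and> init B \<subseteq> states B \<and> accepting B \<subseteq> states B \<and>
     (\<forall>q c. trans B q c \<subseteq> states B)"

definition nba_accepts :: "('s, 'c) nba \<Rightarrow> (nat \<Rightarrow> 'c) \<Rightarrow> bool" where
  "nba_accepts B w \<longleftrightarrow> (\<exists>r. r 0 \<in> init B \<and> (\<forall>n. r (Suc n) \<in> trans B (r n) (w n)) \<and>
                         (\<exists>\<^sub>\<infinity>n. r n \<in> accepting B))"

text \<open>Atomic propositions of a path formula when its state subformulas are treated as atoms:
  outputs, inputs and the maximal subformulas E chi / A chi (boolean and temporal connectives
  as well as negated literals are interpreted compositionally).\<close>
primrec atoms :: "'a ctl \<Rightarrow> 'a ctl set" where
  "atoms TT = {}"
| "atoms FF = {}"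
| "atoms (Out a) = {Out a}"
| "atoms (NOut a) = {Out a}"
| "atoms (In a) = {In a}"
| "atoms (NIn a) = {In a}"
| "atoms (And f g) = atoms f \<union> atoms g"
| "atoms (Or f g) = atoms f \<union> atoms g"
| "atoms (A f) = {A f}"
| "atoms (E f) = {E f}"
| "atoms (X f) = atoms f"
| "atoms (U f g) = atoms f \<union> atoms g"
| "atoms (R f g) = atoms f \<union> atoms g"

primrec wsem :: "'a ctl \<Rightarrow> (nat \<Rightarrow> 'a ctl set) \<Rightarrow> bool" where
  "wsem TT w = True"
| "wsem FF w = False"
| "wsem (Out a) w = (Out a \<in> w 0)"
| "wsem (NOut a) w = (Out a \<notin> w 0)"
| "wsem (In a) w = (In a \<in> w 0)"
| "wsem (NIn a) w = (In a \<notin> w 0)"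
| "wsem (And f g) w = (wsem f w \<and> wsem g w)"
| "wsem (Or f g) w = (wsem f w \<or> wsem g w)"
| "wsem (A f) w = (A f \<in> w 0)"
| "wsem (E f) w = (E f \<in> w 0)"
| "wsem (X f) w = wsem f (\<lambda>i. w (Suc i))"
| "wsem (U f g) w = (\<exists>k. wsem g (\<lambda>i. w (i + k)) \<and> (\<forall>j<k. wsem f (\<lambda>i. w (i + j))))"
| "wsem (R f g) w = (\<forall>k. wsem g (\<lambda>i. w (i + k)) \<or> (\<exists>j<k. wsem f (\<lambda>i. w (i + j))))"

definition nba_for :: "('s, 'a ctl set) nba \<Rightarrow> 'a ctl \<Rightarrow> bool" where
  "nba_for B f \<longleftrightarrow> nba_wf B \<and>
     (\<forall>w. (\<forall>i. w i \<subseteq> atoms f) \<longrightarrow> (nba_accepts B w \<longleftrightarrow> wsem f w))"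

end

theory Submission
  imports Defs "HOL-Library.Infinite_Set"
begin

lemma map_upt_shift: "map es [0..<i + k] = map es [0..<k] @ map (\<lambda>j. es (j + k)) [0..<i]"
  by (induction i) (auto simp: add.commute)

lemma map_upt_Suc': "map es [0..<Suc i] = es 0 # map (\<lambda>j. es (Suc j)) [0..<i]"
  by (induction i) auto

lemma csem_shift: "csem Ins L f (u @ w) e = csem Ins (\<lambda>v. L (u @ v)) f w e"
  by (induction f arbitrary: w e) (auto simp: append_assoc)

lemma csem_state: "is_state f \<Longrightarrow> csem Ins L f w e = csem Ins L f w e'"
  by (induction f) auto

lemma lprop_sem_simps:
  "lprop_sem (LOut a) x = (a \<in> fst (fst x))"
  "lprop_sem (LIn a) x = (a \<in> snd x)"
  "lprop_sem (LV f j) x = (fst (snd (fst x)) f = j)"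
  "lprop_sem (LP f) x = fst (snd (snd (fst x))) f"
  "lprop_sem (LD j) x = (snd x = snd (snd (snd (fst x))) j)"
  by (cases x; auto)+

definition Hc :: "'a set \<Rightarrow> ('a set list \<Rightarrow> 'a set) \<Rightarrow> 'a ctl set \<Rightarrow> 'a set list \<Rightarrow> (nat \<Rightarrow> 'a set)
   \<Rightarrow> (nat \<Rightarrow> 'a xout \<times> 'a set) \<Rightarrow> bool" where
  "Hc Ins L Sub u es c \<longleftrightarrow> (\<forall>i. fst (fst (c i)) = L (u @ map es [0..<i]) \<and> snd (c i) = es i \<and>
     (\<forall>g. E g \<in> Sub \<longrightarrow> fst (snd (fst (c i))) (E g) \<noteq> 0 \<longrightarrow> csem Ins L (E g) (u @ map es [0..<i]) es) \<and>
     (\<forall>g. A g \<in> Sub \<longrightarrow> fst (snd (snd (fst (c i)))) (A g) \<longrightarrow> csem Ins L (A g) (u @ map es [0..<i]) es))"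

definition Hc2 :: "'a set \<Rightarrow> ('a set list \<Rightarrow> 'a set) \<Rightarrow> 'a ctl set \<Rightarrow> 'a set list \<Rightarrow> (nat \<Rightarrow> 'a set)
   \<Rightarrow> (nat \<Rightarrow> 'a xout \<times> 'a set) \<Rightarrow> bool" where
  "Hc2 Ins L Sub u es c \<longleftrightarrow> (\<forall>i. fst (fst (c i)) = L (u @ map es [0..<i]) \<and> snd (c i) = es i \<and>
     (\<forall>g. E g \<in> Sub \<longrightarrow> csem Ins L (E g) (u @ map es [0..<i]) es \<longrightarrow> fst (snd (fst (c i))) (E g) \<noteq> 0) \<and>
     (\<forall>g. A g \<in> Sub \<longrightarrow> csem Ins L (A g) (u @ map es [0..<i]) es \<longrightarrow> fst (snd (snd (fst (c i)))) (A g)))"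

lemma Hc_shift:
  assumes "Hc Ins L Sub u es c"
  shows "Hc Ins L Sub (u @ map es [0..<k]) (\<lambda>j. es (j + k)) (\<lambda>i. c (i + k))"
  unfolding Hc_def apply (rule allI)
  subgoal for i using assms[unfolded Hc_def, THEN spec[of _ "i+k"]] by (simp add: map_upt_shift)
  done

lemma Hc_Suc:
  assumes "Hc Ins L Sub u es c"
  shows "Hc Ins L Sub (u @ [es 0]) (\<lambda>j. es (Suc j)) (\<lambda>i. c (Suc i))"
  using Hc_shift[OF assms, of 1] by simp

lemma Hc2_shift:
  assumes "Hc2 Ins L Sub u es c"
  shows "Hc2 Ins L Sub (u @ map es [0..<k]) (\<lambda>j. es (j + k)) (\<lambda>i. c (i + k))"
  unfolding Hc2_def apply (rule allI)
  subgoal for i using assms[unfolded Hc2_def, THEN spec[of _ "i+k"]] by (simp add: map_upt_shift)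
  done

lemma Hc2_Suc:
  assumes "Hc2 Ins L Sub u es c"
  shows "Hc2 Ins L Sub (u @ [es 0]) (\<lambda>j. es (Suc j)) (\<lambda>i. c (Suc i))"
  using Hc2_shift[OF assms, of 1] by simp

lemma P2C:
  "Hc Ins L Sub u es c \<Longrightarrow> set (subfs f) \<subseteq> Sub \<Longrightarrow> lsem lprop_sem (prime f) c \<Longrightarrow> csem Ins L f u es"
proof (induction f arbitrary: u es c)
  case (Out a) then show ?case using spec[OF Out.prems(1)[unfolded Hc_def], of 0] by (simp add: lprop_sem_simps)
next
  case (NOut a) then show ?case using spec[OF NOut.prems(1)[unfolded Hc_def], of 0] by (simp add: lprop_sem_simps)
next
  case (In a) then show ?case using spec[OF In.prems(1)[unfolded Hc_def], of 0] by (simp add: lprop_sem_simps)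
next
  case (NIn a) then show ?case using spec[OF NIn.prems(1)[unfolded Hc_def], of 0] by (simp add: lprop_sem_simps)
next
  case (A f)
  have "A f \<in> Sub" using A.prems(2) by simp
  moreover have "\<forall>g. A g \<in> Sub \<longrightarrow> fst (snd (snd (fst (c 0)))) (A g) \<longrightarrow> csem Ins L (A g) u es"
    using spec[OF A.prems(1)[unfolded Hc_def], of 0] by simp
  ultimately show ?case using A.prems(3) by (simp add: lprop_sem_simps)
next
  case (E f)
  have "E f \<in> Sub" using E.prems(2) by simp
  moreover have "\<forall>g. E g \<in> Sub \<longrightarrow> fst (snd (fst (c 0))) (E g) \<noteq> 0 \<longrightarrow> csem Ins L (E g) u es"
    using spec[OF E.prems(1)[unfolded Hc_def], of 0] by simp
  ultimately show ?case using E.prems(3) by (simp add: lprop_sem_simps)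
next
  case (X f)
  have "lsem lprop_sem (prime f) (\<lambda>i. c (Suc i))" using X.prems(3) by simp
  then show ?case using X.IH[OF Hc_Suc[OF X.prems(1)]] X.prems(2) by simp
next
  case (U f g)
  from U.prems(3) obtain k where k: "lsem lprop_sem (prime g) (\<lambda>i. c (i + k))"
    "\<forall>j<k. lsem lprop_sem (prime f) (\<lambda>i. c (i + j))" by auto
  show ?case using U.IH(2)[OF Hc_shift[OF U.prems(1)] _ k(1)] U.IH(1)[OF Hc_shift[OF U.prems(1)] _ k(2)[rule_format]] U.prems(2)
    by auto
next
  case (R f g)
  show ?case
  proof (simp only: csem.simps, intro allI)
    fix k
    from R.prems(3) have "lsem lprop_sem (prime g) (\<lambda>i. c (i + k)) \<or> (\<exists>j<k. lsem lprop_sem (prime f) (\<lambda>i. c (i + j)))" by auto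
    then show "csem Ins L g (u @ map es [0..<k]) (\<lambda>j. es (j + k)) \<or>
          (\<exists>j<k. csem Ins L f (u @ map es [0..<j]) (\<lambda>i. es (i + j)))"
      using R.IH(2)[OF Hc_shift[OF R.prems(1)]] R.IH(1)[OF Hc_shift[OF R.prems(1)]] R.prems(2) by auto
  qed
qed (simp; blast)+


lemma C2P:
  "Hc2 Ins L Sub u es c \<Longrightarrow> set (subfs f) \<subseteq> Sub \<Longrightarrow> csem Ins L f u es \<Longrightarrow> lsem lprop_sem (prime f) c"
proof (induction f arbitrary: u es c)
  case (Out a) then show ?case using spec[OF Out.prems(1)[unfolded Hc2_def], of 0] by (simp add: lprop_sem_simps)
next
  case (NOut a) then show ?case using spec[OF NOut.prems(1)[unfolded Hc2_def], of 0] by (simp add: lprop_sem_simps)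
next
  case (In a) then show ?case using spec[OF In.prems(1)[unfolded Hc2_def], of 0] by (simp add: lprop_sem_simps)
next
  case (NIn a) then show ?case using spec[OF NIn.prems(1)[unfolded Hc2_def], of 0] by (simp add: lprop_sem_simps)
next
  case (A f)
  have "A f \<in> Sub" using A.prems(2) by simp
  moreover have "\<forall>g. A g \<in> Sub \<longrightarrow> csem Ins L (A g) u es \<longrightarrow> fst (snd (snd (fst (c 0)))) (A g)"
    using spec[OF A.prems(1)[unfolded Hc2_def], of 0] by simp
  ultimately show ?case using A.prems(3) by (simp add: lprop_sem_simps)
next
  case (E f)
  have "E f \<in> Sub" using E.prems(2) by simp
  moreover have "\<forall>g. E g \<in> Sub \<longrightarrow> csem Ins L (E g) u es \<longrightarrow> fst (snd (fst (c 0))) (E g) \<noteq> 0"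
    using spec[OF E.prems(1)[unfolded Hc2_def], of 0] by simp
  ultimately show ?case using E.prems(3) by (simp add: lprop_sem_simps)
next
  case (X f)
  have "csem Ins L f (u @ [es 0]) (\<lambda>j. es (Suc j))" using X.prems(3) by simp
  then show ?case using X.IH[OF Hc2_Suc[OF X.prems(1)]] X.prems(2) by simp
next
  case (U f g)
  from U.prems(3) obtain k where k: "csem Ins L g (u @ map es [0..<k]) (\<lambda>j. es (j + k))"
    "\<forall>j<k. csem Ins L f (u @ map es [0..<j]) (\<lambda>i. es (i + j))" by auto
  show ?case using U.IH(2)[OF Hc2_shift[OF U.prems(1)] _ k(1)] U.IH(1)[OF Hc2_shift[OF U.prems(1)] _ k(2)[rule_format]] U.prems(2)
    by auto
next
  case (R f g)
  show ?case
  proof (simp only: lsem.simps prime.simps, intro allI)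
    fix k
    from R.prems(3) have "csem Ins L g (u @ map es [0..<k]) (\<lambda>j. es (j + k)) \<or>
          (\<exists>j<k. csem Ins L f (u @ map es [0..<j]) (\<lambda>i. es (i + j)))" by auto
    then show "lsem lprop_sem (prime g) (\<lambda>i. c (i + k)) \<or> (\<exists>j<k. lsem lprop_sem (prime f) (\<lambda>i. c (i + j)))"
      using R.IH(2)[OF Hc2_shift[OF R.prems(1)]] R.IH(1)[OF Hc2_shift[OF R.prems(1)]] R.prems(2) by auto
  qed
qed (simp; blast)+

definition holdsN :: "'a set \<Rightarrow> ('a set list \<Rightarrow> 'a set) \<Rightarrow> 'a set list \<Rightarrow> 'a set \<Rightarrow> 'a ctl \<Rightarrow> bool" where
  "holdsN Ins L u e x = (case x of Out a \<Rightarrow> a \<in> L u | In a \<Rightarrow> a \<in> e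
     | A g \<Rightarrow> csem Ins L (A g) u (\<lambda>_. {}) | E g \<Rightarrow> csem Ins L (E g) u (\<lambda>_. {}) | _ \<Rightarrow> False)"

definition wordN :: "'a set \<Rightarrow> ('a set list \<Rightarrow> 'a set) \<Rightarrow> 'a ctl set \<Rightarrow> 'a set list \<Rightarrow> (nat \<Rightarrow> 'a set) \<Rightarrow> nat \<Rightarrow> 'a ctl set" where
  "wordN Ins L Atm u es i = {x \<in> Atm. holdsN Ins L (u @ map es [0..<i]) (es i) x}"

lemma wordN_shift: "(\<lambda>i. wordN Ins L Atm u es (i + k)) = wordN Ins L Atm (u @ map es [0..<k]) (\<lambda>j. es (j + k))"
  by (rule ext) (simp add: wordN_def map_upt_shift)

lemma wordN_Suc: "(\<lambda>i. wordN Ins L Atm u es (Suc i)) = wordN Ins L Atm (u @ [es 0]) (\<lambda>j. es (Suc j))"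
  using wordN_shift[of Ins L Atm u es 1] by simp

lemma W2C: "atoms f \<subseteq> Atm \<Longrightarrow> wsem f (wordN Ins L Atm u es) = csem Ins L f u es"
proof (induction f arbitrary: u es)
  case (X f) then show ?case by (simp add: wordN_Suc)
next
  case (U f g) then show ?case by (simp add: wordN_shift)
next
  case (R f g) then show ?case by (simp add: wordN_shift)
qed (auto simp: wordN_def holdsN_def)


definition isrun :: "('v \<Rightarrow> ('i \<times> 'v) set) \<Rightarrow> (nat \<Rightarrow> 'v) \<Rightarrow> (nat \<Rightarrow> 'i) \<Rightarrow> bool" where
  "isrun succ vs es \<longleftrightarrow> (\<forall>n. (es n, vs (Suc n)) \<in> succ (vs n))"

definition Wn :: "('v \<Rightarrow> ('i \<times> 'v) set) \<Rightarrow> 'v set \<Rightarrow> 'v set" where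
  "Wn succ F = {v. \<exists>vs es. vs 0 = v \<and> isrun succ vs es \<and> (\<exists>\<^sub>\<infinity>n. vs n \<in> F)}"

primrec Rn :: "('v \<Rightarrow> ('i \<times> 'v) set) \<Rightarrow> 'v set \<Rightarrow> nat \<Rightarrow> 'v \<Rightarrow> bool" where
  "Rn succ F 0 v = (\<exists>x\<in>succ v. snd x \<in> Wn succ F \<and> snd x \<in> F)"
| "Rn succ F (Suc n) v = (\<exists>x\<in>succ v. snd x \<in> Wn succ F \<and> (snd x \<in> F \<or> Rn succ F n (snd x)))"

definition dd :: "('v \<Rightarrow> ('i \<times> 'v) set) \<Rightarrow> 'v set \<Rightarrow> 'v \<Rightarrow> nat" where
  "dd succ F v = (LEAST n. Rn succ F n v)"

definition sig :: "('v \<Rightarrow> ('i \<times> 'v) set) \<Rightarrow> 'v set \<Rightarrow> 'v \<Rightarrow> 'i \<times> 'v" where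
  "sig succ F v = (SOME x. x \<in> succ v \<and> snd x \<in> Wn succ F \<and>
      (snd x \<in> F \<or> (\<exists>n. dd succ F v = Suc n \<and> Rn succ F n (snd x))))"

lemma INFM_shift: "(\<exists>\<^sub>\<infinity>n. P n) \<Longrightarrow> (\<exists>\<^sub>\<infinity>n. P (n + (i::nat)))"
  unfolding INFM_nat
proof
  fix m assume "\<forall>m. \<exists>n>m. P n"
  then obtain n where "n > m + i" "P n" by blast
  then show "\<exists>n>m. P (n + i)" by (intro exI[of _ "n - i"]) auto
qed

lemma Wn_suffix:
  assumes "isrun succ vs es" "\<exists>\<^sub>\<infinity>n. vs n \<in> F"
  shows "vs i \<in> Wn succ F"
  unfolding Wn_def
proof (intro CollectI exI conjI)
  show "(\<lambda>n. vs (n + i)) 0 = vs i" by simp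
  show "isrun succ (\<lambda>n. vs (n + i)) (\<lambda>n. es (n + i))" using assms(1) unfolding isrun_def by simp
  show "\<exists>\<^sub>\<infinity>n. vs (n + i) \<in> F" using INFM_shift[OF assms(2)] .
qed

lemma Rn_run:
  assumes "isrun succ vs es" "\<exists>\<^sub>\<infinity>n. vs n \<in> F"
  shows "vs (i + Suc n) \<in> F \<Longrightarrow> Rn succ F n (vs i)"
proof (induction n arbitrary: i)
  case 0
  have "(es i, vs (Suc i)) \<in> succ (vs i)" using assms(1) unfolding isrun_def by blast
  then show ?case using 0 Wn_suffix[OF assms, of "Suc i"] by force
next
  case (Suc n)
  have "(es i, vs (Suc i)) \<in> succ (vs i)" using assms(1) unfolding isrun_def by blast
  moreover have "Rn succ F n (vs (Suc i))" using Suc.IH[of "Suc i"] Suc.prems by simp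
  ultimately show ?case using Wn_suffix[OF assms, of "Suc i"] by force
qed

lemma Rn_ex: "v \<in> Wn succ F \<Longrightarrow> \<exists>n. Rn succ F n v"
proof -
  assume "v \<in> Wn succ F"
  then obtain vs es where r: "vs 0 = v" "isrun succ vs es" "\<exists>\<^sub>\<infinity>n. vs n \<in> F" unfolding Wn_def by blast
  then obtain m where "m > 0" "vs m \<in> F" unfolding INFM_nat by blast
  then have "vs (0 + Suc (m - 1)) \<in> F" by simp
  from Rn_run[OF r(2,3) this] r(1) show ?thesis by auto
qed

lemma sig_prop:
  assumes "v \<in> Wn succ F"
  shows "sig succ F v \<in> succ v \<and> snd (sig succ F v) \<in> Wn succ F \<and>
    (snd (sig succ F v) \<in> F \<or> dd succ F (snd (sig succ F v)) < dd succ F v)"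
proof -
  have R: "Rn succ F (dd succ F v) v" unfolding dd_def using Rn_ex[OF assms] by (rule LeastI_ex)
  have "\<exists>x. x \<in> succ v \<and> snd x \<in> Wn succ F \<and>
      (snd x \<in> F \<or> (\<exists>n. dd succ F v = Suc n \<and> Rn succ F n (snd x)))"
  proof (cases "dd succ F v")
    case 0 then have "Rn succ F 0 v" using R by simp
    then show ?thesis by force
  next
    case (Suc n) then have "Rn succ F (Suc n) v" using R by simp
    then show ?thesis using Suc by force
  qed
  then have S: "sig succ F v \<in> succ v \<and> snd (sig succ F v) \<in> Wn succ F \<and>
      (snd (sig succ F v) \<in> F \<or> (\<exists>n. dd succ F v = Suc n \<and> Rn succ F n (snd (sig succ F v))))"
    unfolding sig_def by (rule someI_ex)
  have "dd succ F (snd (sig succ F v)) \<le> n" if "Rn succ F n (snd (sig succ F v))" for n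
    unfolding dd_def using that by (rule Least_le)
  then show ?thesis using S by force
qed

lemma sig_stay: "v \<in> Wn succ F \<Longrightarrow> ((\<lambda>v. snd (sig succ F v)) ^^ n) v \<in> Wn succ F"
  by (induction n) (auto dest: sig_prop)

lemma sig_hit: "v \<in> Wn succ F \<Longrightarrow> \<exists>m. ((\<lambda>v. snd (sig succ F v)) ^^ Suc m) v \<in> F"
proof (induction "dd succ F v" arbitrary: v rule: less_induct)
  case less
  note P = sig_prop[OF less.prems]
  show ?case
  proof (cases "snd (sig succ F v) \<in> F")
    case True then show ?thesis by (intro exI[of _ 0]) simp
  next
    case False
    then have "dd succ F (snd (sig succ F v)) < dd succ F v" using P by blast
    from less.hyps[OF this] P obtain m where "((\<lambda>v. snd (sig succ F v)) ^^ Suc m) (snd (sig succ F v)) \<in> F" by blast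
    then show ?thesis by (intro exI[of _ "Suc m"]) (simp only: funpow_Suc_right o_apply)
  qed
qed

lemma sig_inf: "v \<in> Wn succ F \<Longrightarrow> \<exists>\<^sub>\<infinity>n. ((\<lambda>v. snd (sig succ F v)) ^^ n) v \<in> F"
  unfolding INFM_nat
proof
  fix m assume v: "v \<in> Wn succ F"
  obtain m' where "((\<lambda>v. snd (sig succ F v)) ^^ Suc m') (((\<lambda>v. snd (sig succ F v)) ^^ m) v) \<in> F"
    using sig_hit[OF sig_stay[OF v]] by blast
  then have "((\<lambda>v. snd (sig succ F v)) ^^ (Suc m' + m)) v \<in> F" by (simp only: funpow_add o_apply)
  then show "\<exists>n>m. ((\<lambda>v. snd (sig succ F v)) ^^ n) v \<in> F" by (intro exI[of _ "Suc m' + m"]) simp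
qed


lemma reach_append: "reach tau t (u @ w) = reach tau (reach tau t u) w"
  by (simp add: reach_def)

lemma reach_Suc: "reach tau t (map es [0..<Suc n]) = tau (reach tau t (map es [0..<n])) (es n)"
  by (simp add: reach_def)

lemma reach_in: "t \<in> T \<Longrightarrow> (\<forall>t\<in>T. \<forall>e. e \<subseteq> Ins \<longrightarrow> tau t e \<in> T) \<Longrightarrow> (\<forall>a\<in>set w. a \<subseteq> Ins) \<Longrightarrow> reach tau t w \<in> T"
  unfolding reach_def by (induction w arbitrary: t) auto

lemma lsem_LG: "lsem P (LG f) w = (\<forall>k. lsem P f (\<lambda>i. w (i + k)))"
  by (simp add: LG_def)

lemma lsem_LImp: "lsem P (LImp f g) w = (lsem P f w \<longrightarrow> lsem P g w)"
  by (simp add: LImp_def)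

lemma lsem_LConj: "lsem P (LConj fs) w = (\<forall>f\<in>set fs. lsem P f w)"
  by (induction fs) (simp_all add: LConj_def)

locale dir2 =
  fixes Ins Outs :: "'a set" and Phi :: "'a ctl" and aut :: "'a ctl \<Rightarrow> ('s, 'a ctl set) nba" and k :: nat
    and T :: "nat set" and t0 :: nat and tau :: "nat \<Rightarrow> 'a set \<Rightarrow> nat" and out :: "nat \<Rightarrow> 'a set"
  assumes moo: "moore Ins (\<lambda>s. s \<subseteq> Outs) T t0 tau out"
    and sat: "csem Ins (\<lambda>w. out (reach tau t0 w)) Phi [] (\<lambda>_. {})"
    and auts: "\<forall>Ef \<in> set (F_exist Phi). nba_for (aut Ef) (body Ef)"
    and kdef: "k = (\<Sum>Ef \<in> set (F_exist Phi). card (states (aut Ef)))"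
    and isst: "is_state Phi"
begin

definition LT where "LT t = (\<lambda>w. out (reach tau t w))"
definition st where "st t f = csem Ins (LT t) f [] (\<lambda>_. {})"
definition hold where "hold t e x = holdsN Ins (LT t) [] e x"
definition letter where "letter Ef t e = {x \<in> atoms (body Ef). hold t e x}"
definition succ where "succ Ef v = {(e, (tau (fst v) e, q')) | e q'. e \<subseteq> Ins \<and> q' \<in> trans (aut Ef) (snd v) (letter Ef (fst v) e)}"
definition Fa where "Fa Ef = {v. snd v \<in> accepting (aut Ef)}"
definition WW where "WW Ef = Wn (succ Ef) (Fa Ef)"
definition sg where "sg Ef = sig (succ Ef) (Fa Ef)"
definition hh where "hh Ef v = snd (sg Ef v)"
definition inputs where "inputs Ef v = (\<lambda>i. fst (sg Ef ((hh Ef ^^ i) v)))"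
definition acc where "acc Ef t es = nba_accepts (aut Ef) (\<lambda>i. letter Ef (reach tau t (map es [0..<i])) (es i))"
definition EF where "EF = set (F_exist Phi)"

lemma T_closed: "\<forall>t\<in>T. \<forall>e. e \<subseteq> Ins \<longrightarrow> tau t e \<in> T" and t0T: "t0 \<in> T" and finT: "finite T"
  and outO: "\<forall>t\<in>T. out t \<subseteq> Outs"
  using moo unfolding moore_def by auto

lemma LT_shift: "(\<lambda>v. LT t (u @ v)) = LT (reach tau t u)"
  by (rule ext) (simp add: LT_def reach_append)

lemma csem_LT: "csem Ins (LT t) f u e = csem Ins (LT (reach tau t u)) f [] e"
  using csem_shift[of Ins "LT t" f u "[]" e] by (simp add: LT_shift)

lemma holdsN_LT: "holdsN Ins (LT t) u e x = hold (reach tau t u) e x"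
proof -
  have "csem Ins (LT t) f u e' = csem Ins (LT (reach tau t u)) f [] e'" for f e' by (rule csem_LT)
  moreover have "LT t u = LT (reach tau t u) []" by (simp add: LT_def reach_def)
  ultimately show ?thesis unfolding hold_def holdsN_def by (cases x) (simp_all del: csem.simps)
qed

lemma EF_E: "Ef \<in> EF \<Longrightarrow> \<exists>g. Ef = E g"
  unfolding EF_def F_exist_def is_E_def by auto

lemma nbafor: "Ef \<in> EF \<Longrightarrow> nba_for (aut Ef) (body Ef)"
  using auts EF_def by auto

lemma word_letter: "wordN Ins (LT t) (atoms (body Ef)) [] es = (\<lambda>i. letter Ef (reach tau t (map es [0..<i])) (es i))"
  by (rule ext) (simp add: wordN_def letter_def holdsN_LT)

lemma acc_csem: "Ef \<in> EF \<Longrightarrow> acc Ef t es \<longleftrightarrow> csem Ins (LT t) (body Ef) [] es"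
proof -
  assume "Ef \<in> EF"
  then have N: "nba_for (aut Ef) (body Ef)" by (rule nbafor)
  have "acc Ef t es \<longleftrightarrow> wsem (body Ef) (\<lambda>i. letter Ef (reach tau t (map es [0..<i])) (es i))"
    using N unfolding nba_for_def acc_def letter_def by auto
  also have "\<dots> \<longleftrightarrow> csem Ins (LT t) (body Ef) [] es"
    using W2C[of "body Ef" "atoms (body Ef)" Ins "LT t" "[]" es] by (simp add: word_letter)
  finally show ?thesis .
qed


lemma sg_succ: "v \<in> WW Ef \<Longrightarrow> sg Ef v \<in> succ Ef v \<and> hh Ef v \<in> WW Ef"
  using sig_prop[of v "succ Ef" "Fa Ef"] unfolding WW_def sg_def hh_def by simp

lemma sg_form: "v \<in> WW Ef \<Longrightarrow> fst (sg Ef v) \<subseteq> Ins \<and> fst (hh Ef v) = tau (fst v) (fst (sg Ef v)) \<and>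
    snd (hh Ef v) \<in> trans (aut Ef) (snd v) (letter Ef (fst v) (fst (sg Ef v)))"
proof -
  assume "v \<in> WW Ef"
  then have "sg Ef v \<in> succ Ef v" using sg_succ by blast
  then obtain e q' where "sg Ef v = (e, (tau (fst v) e, q'))" "e \<subseteq> Ins"
     "q' \<in> trans (aut Ef) (snd v) (letter Ef (fst v) e)" unfolding succ_def by blast
  then show ?thesis by (simp add: hh_def)
qed

lemma hh_stay: "v \<in> WW Ef \<Longrightarrow> (hh Ef ^^ n) v \<in> WW Ef"
  by (induction n) (auto dest: sg_succ)

lemma inputs_Suc: "inputs Ef v (Suc i) = inputs Ef (hh Ef v) i"
  unfolding inputs_def by (simp only: funpow_Suc_right o_apply)

lemma inputs_0: "inputs Ef v 0 = fst (sg Ef v)"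
  by (simp add: inputs_def)

lemma run_fst: "v \<in> WW Ef \<Longrightarrow> fst ((hh Ef ^^ n) v) = reach tau (fst v) (map (inputs Ef v) [0..<n])"
proof (induction n)
  case 0 then show ?case by (simp add: reach_def)
next
  case (Suc n)
  have "fst ((hh Ef ^^ Suc n) v) = tau (fst ((hh Ef ^^ n) v)) (fst (sg Ef ((hh Ef ^^ n) v)))"
    using sg_form[OF hh_stay[OF Suc.prems, of n]] by simp
  then show ?case using Suc by (simp only: reach_Suc) (simp add: inputs_def)
qed

lemma acc_run: "v \<in> WW Ef \<Longrightarrow> snd v \<in> init (aut Ef) \<Longrightarrow> acc Ef (fst v) (inputs Ef v)"
  unfolding acc_def nba_accepts_def
proof (intro exI[of _ "\<lambda>n. snd ((hh Ef ^^ n) v)"] conjI allI)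
  assume v: "v \<in> WW Ef" "snd v \<in> init (aut Ef)"
  show "snd ((hh Ef ^^ 0) v) \<in> init (aut Ef)" using v by simp
  fix n
  have "snd (hh Ef ((hh Ef ^^ n) v)) \<in> trans (aut Ef) (snd ((hh Ef ^^ n) v))
      (letter Ef (fst ((hh Ef ^^ n) v)) (fst (sg Ef ((hh Ef ^^ n) v))))"
    using sg_form[OF hh_stay[OF v(1), of n]] by simp
  then show "snd ((hh Ef ^^ Suc n) v) \<in> trans (aut Ef) (snd ((hh Ef ^^ n) v))
      (letter Ef (reach tau (fst v) (map (inputs Ef v) [0..<n])) (inputs Ef v n))"
    using run_fst[OF v(1), of n] by (simp add: inputs_def)
next
  assume v: "v \<in> WW Ef" "snd v \<in> init (aut Ef)"
  have "\<exists>\<^sub>\<infinity>n. ((\<lambda>v. snd (sig (succ Ef) (Fa Ef) v)) ^^ n) v \<in> Fa Ef"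
    by (rule sig_inf[OF v(1)[unfolded WW_def]])
  then show "\<exists>\<^sub>\<infinity>n. snd ((hh Ef ^^ n) v) \<in> accepting (aut Ef)"
    unfolding hh_def sg_def Fa_def by simp
qed

lemma W_exists: "Ef \<in> EF \<Longrightarrow> st t Ef \<Longrightarrow> \<exists>q. q \<in> init (aut Ef) \<and> (t, q) \<in> WW Ef"
proof -
  assume Ef: "Ef \<in> EF" "st t Ef"
  obtain g where g: "Ef = E g" using EF_E[OF Ef(1)] by blast
  obtain e' where e': "\<forall>j. e' j \<subseteq> Ins" "csem Ins (LT t) g [] e'" using Ef(2) unfolding st_def g by auto
  have "acc Ef t e'" using acc_csem[OF Ef(1)] e'(2) g by simp
  then obtain r where r: "r 0 \<in> init (aut Ef)"
      "\<forall>n. r (Suc n) \<in> trans (aut Ef) (r n) (letter Ef (reach tau t (map e' [0..<n])) (e' n))"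
      "\<exists>\<^sub>\<infinity>n. r n \<in> accepting (aut Ef)"
    unfolding acc_def nba_accepts_def by blast
  define vs where "vs n = (reach tau t (map e' [0..<n]), r n)" for n
  have "isrun (succ Ef) vs e'"
    unfolding isrun_def
  proof
    fix n
    have "reach tau t (map e' [0..<Suc n]) = tau (reach tau t (map e' [0..<n])) (e' n)" by (rule reach_Suc)
    then show "(e' n, vs (Suc n)) \<in> succ Ef (vs n)"
      unfolding vs_def succ_def using r(2) e'(1) by auto
  qed
  moreover have "\<exists>\<^sub>\<infinity>n. vs n \<in> Fa Ef" using r(3) unfolding vs_def Fa_def by simp
  moreover have "vs 0 = (t, r 0)" by (simp add: vs_def reach_def)
  ultimately have "(t, r 0) \<in> WW Ef" unfolding WW_def Wn_def by blast
  then show ?thesis using r(1) by blast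
qed


lemma nbawf: "Ef \<in> EF \<Longrightarrow> finite (states (aut Ef)) \<and> init (aut Ef) \<subseteq> states (aut Ef) \<and>
    (\<forall>q c. trans (aut Ef) q c \<subseteq> states (aut Ef))"
  using nbafor unfolding nba_for_def nba_wf_def by blast

definition q0 where "q0 Ef t = (SOME q. q \<in> init (aut Ef) \<and> (t, q) \<in> WW Ef)"
definition reuse where "reuse m Ef t \<longleftrightarrow> (\<exists>r q. m (Ef, r) = Some q \<and> acc Ef t (inputs Ef (t, q)))"
definition rsl where "rsl m Ef t = (SOME r. \<exists>q. m (Ef, r) = Some q \<and> acc Ef t (inputs Ef (t, q)))"
definition fsl where "fsl m Ef = (SOME r. r \<in> states (aut Ef) \<and> m (Ef, r) = None)"
definition need where "need m Ef t \<longleftrightarrow> Ef \<in> EF \<and> st t Ef \<and> \<not> reuse m Ef t"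
definition ext where "ext t m x = (if need m (fst x) t \<and> snd x = fsl m (fst x) then Some (q0 (fst x) t) else m x)"
definition cs where "cs t m Ef = (if reuse m Ef t then rsl m Ef t else fsl m Ef)"
definition Ds where "Ds = Sigma EF (\<lambda>Ef. states (aut Ef))"
definition InvM where "InvM t m \<longleftrightarrow>
   (\<forall>x q. m x = Some q \<longrightarrow> x \<in> Ds \<and> q \<in> states (aut (fst x)) \<and> (t, q) \<in> WW (fst x)) \<and>
   (\<forall>Ef r1 r2 q1 q2. m (Ef, r1) = Some q1 \<longrightarrow> m (Ef, r2) = Some q2 \<longrightarrow> r1 \<noteq> r2 \<longrightarrow>
        inputs Ef (t, q1) \<noteq> inputs Ef (t, q2))"
definition Dl where "Dl z e = (tau (fst z) e, (\<lambda>x. case ext (fst z) (snd z) x of None \<Rightarrow> None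
   | Some q \<Rightarrow> if fst (sg (fst x) (fst z, q)) = e then Some (snd (hh (fst x) (fst z, q))) else None))"
definition Inv where "Inv z \<longleftrightarrow> fst z \<in> T \<and> InvM (fst z) (snd z)"

lemma q0_prop: "Ef \<in> EF \<Longrightarrow> st t Ef \<Longrightarrow> q0 Ef t \<in> init (aut Ef) \<and> (t, q0 Ef t) \<in> WW Ef"
  unfolding q0_def using W_exists by (rule someI_ex)

lemma acc_q0: "Ef \<in> EF \<Longrightarrow> st t Ef \<Longrightarrow> acc Ef t (inputs Ef (t, q0 Ef t))"
  using acc_run[of "(t, q0 Ef t)" Ef] q0_prop[of Ef t] by simp

lemma fsl_prop:
  assumes I: "InvM t m" and N: "need m Ef t"
  shows "fsl m Ef \<in> states (aut Ef) \<and> m (Ef, fsl m Ef) = None"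
proof -
  have Ef: "Ef \<in> EF" "st t Ef" "\<not> reuse m Ef t" using N unfolding need_def by auto
  define Q where "Q = states (aut Ef)"
  have fQ: "finite Q" and iQ: "init (aut Ef) \<subseteq> Q" using nbawf[OF Ef(1)] Q_def by auto
  have "\<exists>r. r \<in> Q \<and> m (Ef, r) = None"
  proof (rule ccontr)
    assume "\<not> ?thesis"
    then have all: "\<forall>r\<in>Q. \<exists>q. m (Ef, r) = Some q" by auto
    define f where "f r = the (m (Ef, r))" for r
    have mf: "m (Ef, r) = Some (f r)" if "r \<in> Q" for r using all that f_def by auto
    have "f ` Q \<subseteq> Q" using I mf unfolding InvM_def Q_def by fastforce
    moreover have "inj_on f Q"
    proof (rule inj_onI)
      fix r1 r2 assume "r1 \<in> Q" "r2 \<in> Q" "f r1 = f r2"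
      then show "r1 = r2" using I mf[of r1] mf[of r2] unfolding InvM_def by metis
    qed
    ultimately have "f ` Q = Q" using endo_inj_surj fQ by blast
    moreover have "q0 Ef t \<in> Q" using q0_prop[OF Ef(1,2)] iQ by blast
    ultimately obtain r where "r \<in> Q" "f r = q0 Ef t" by (metis imageE)
    then have "m (Ef, r) = Some (q0 Ef t)" using mf by simp
    then have "reuse m Ef t" unfolding reuse_def using acc_q0[OF Ef(1,2)] by blast
    then show False using Ef(3) by simp
  qed
  then show ?thesis unfolding fsl_def Q_def by (rule someI_ex)
qed

lemma ext_ext: "InvM t m \<Longrightarrow> m x = Some q \<Longrightarrow> ext t m x = Some q"
  using fsl_prop[of t m "fst x"] unfolding ext_def by (cases x) auto

lemma InvM_ext:
  assumes I: "InvM t m"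
  shows "InvM t (ext t m)"
  unfolding InvM_def
proof (intro conjI)
  show "\<forall>x q. ext t m x = Some q \<longrightarrow> x \<in> Ds \<and> q \<in> states (aut (fst x)) \<and> (t, q) \<in> WW (fst x)"
  proof (intro allI impI)
  fix x q assume x: "ext t m x = Some q"
  show "x \<in> Ds \<and> q \<in> states (aut (fst x)) \<and> (t, q) \<in> WW (fst x)"
  proof (cases "need m (fst x) t \<and> snd x = fsl m (fst x)")
    case True
    then have q: "q = q0 (fst x) t" using x unfolding ext_def by simp
    have N: "fst x \<in> EF" "st t (fst x)" using True unfolding need_def by auto
    have "snd x \<in> states (aut (fst x))" using fsl_prop[OF I, of "fst x"] True by auto
    then show ?thesis using q q0_prop[OF N] nbawf[OF N(1)] N(1) unfolding Ds_def
      by (cases x) auto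
  next
    case False
    then have "m x = Some q" using x unfolding ext_def by (simp split: if_splits)
    then show ?thesis using I unfolding InvM_def by blast
  qed
  qed
next
  show "\<forall>Ef r1 r2 q1 q2. ext t m (Ef, r1) = Some q1 \<longrightarrow> ext t m (Ef, r2) = Some q2 \<longrightarrow> r1 \<noteq> r2 \<longrightarrow>
        inputs Ef (t, q1) \<noteq> inputs Ef (t, q2)"
  proof (intro allI impI)
  fix Ef r1 r2 q1 q2 assume a: "ext t m (Ef, r1) = Some q1" "ext t m (Ef, r2) = Some q2" "r1 \<noteq> r2"
  have key: "inputs Ef (t, q0 Ef t) \<noteq> inputs Ef (t, q)" if "need m Ef t" "m (Ef, r) = Some q" for r q
  proof
    assume "inputs Ef (t, q0 Ef t) = inputs Ef (t, q)"
    then have "acc Ef t (inputs Ef (t, q))" using acc_q0[of Ef t] that(1) unfolding need_def by metis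
    then have "reuse m Ef t" using that(2) unfolding reuse_def by blast
    then show False using that(1) unfolding need_def by simp
  qed
  show "inputs Ef (t, q1) \<noteq> inputs Ef (t, q2)"
  proof (cases "need m Ef t")
    case False
    then have "m (Ef, r1) = Some q1" "m (Ef, r2) = Some q2" using a unfolding ext_def by auto
    then show ?thesis using I a(3) unfolding InvM_def by blast
  next
    case True
    show ?thesis
    proof (cases "r1 = fsl m Ef")
      case True1: True
      then have "r2 \<noteq> fsl m Ef" using a(3) by simp
      then have "m (Ef, r2) = Some q2" "q1 = q0 Ef t" using a True True1 unfolding ext_def by auto
      then show ?thesis using key[OF True] by simp
    next
      case False1: False
      then have m1: "m (Ef, r1) = Some q1" using a unfolding ext_def by auto
      show ?thesis
      proof (cases "r2 = fsl m Ef")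
        case True
        then have "q2 = q0 Ef t" using a \<open>need m Ef t\<close> unfolding ext_def by auto
        then show ?thesis using key[OF \<open>need m Ef t\<close> m1] by metis
      next
        case False
        then have "m (Ef, r2) = Some q2" using a unfolding ext_def by auto
        then show ?thesis using I a(3) m1 unfolding InvM_def by blast
      qed
    qed
  qed
  qed
qed


lemma Dl_some: "snd (Dl (t, m) e) x = Some q'' \<longleftrightarrow>
   (\<exists>q. ext t m x = Some q \<and> fst (sg (fst x) (t, q)) = e \<and> q'' = snd (hh (fst x) (t, q)))"
  unfolding Dl_def by (auto split: option.splits)

lemma hh_pair: "v \<in> WW Ef \<Longrightarrow> hh Ef v = (tau (fst v) (fst (sg Ef v)), snd (hh Ef v))"
  using sg_form[of v Ef] by (metis prod.collapse)

lemma inputs_eq: "fst (sg Ef v) = fst (sg Ef w) \<Longrightarrow> inputs Ef (hh Ef v) = inputs Ef (hh Ef w) \<Longrightarrow> inputs Ef v = inputs Ef w"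
proof (rule ext)
  fix i assume a: "fst (sg Ef v) = fst (sg Ef w)" "inputs Ef (hh Ef v) = inputs Ef (hh Ef w)"
  show "inputs Ef v i = inputs Ef w i"
    using a by (cases i) (simp_all add: inputs_0 inputs_Suc)
qed

lemma Inv_Dl:
  assumes I: "Inv (t, m)" and e: "e \<subseteq> Ins"
  shows "Inv (Dl (t, m) e)"
proof -
  have tT: "t \<in> T" and IM: "InvM t m" using I unfolding Inv_def by auto
  have IE: "InvM t (ext t m)" by (rule InvM_ext[OF IM])
  have fstD: "fst (Dl (t, m) e) = tau t e" by (simp add: Dl_def)
  have P1: "x \<in> Ds \<and> q'' \<in> states (aut (fst x)) \<and> (tau t e, q'') \<in> WW (fst x)"
    if "snd (Dl (t, m) e) x = Some q''" for x q''
  proof -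
    from that[unfolded Dl_some] obtain q where q: "ext t m x = Some q" "fst (sg (fst x) (t, q)) = e" "q'' = snd (hh (fst x) (t, q))"
      by blast
    have x: "x \<in> Ds" "(t, q) \<in> WW (fst x)" using IE q(1) unfolding InvM_def by blast+
    have EF: "fst x \<in> EF" using x(1) unfolding Ds_def by auto
    have "hh (fst x) (t, q) = (tau t e, q'')" using hh_pair[OF x(2)] q by simp
    moreover have "hh (fst x) (t, q) \<in> WW (fst x)" using sg_succ[OF x(2)] by blast
    moreover have "q'' \<in> states (aut (fst x))"
    proof -
      have tr: "snd (hh (fst x) (t, q)) \<in> trans (aut (fst x)) q (letter (fst x) t (fst (sg (fst x) (t, q))))"
        using sg_form[OF x(2)] by simp
      have "trans (aut (fst x)) q (letter (fst x) t (fst (sg (fst x) (t, q)))) \<subseteq> states (aut (fst x))"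
        using nbawf[OF EF] by blast
      then show ?thesis using tr q(3) by blast
    qed
    ultimately show ?thesis using x(1) by simp
  qed
  have P2: "inputs Ef (tau t e, q1) \<noteq> inputs Ef (tau t e, q2)"
    if "snd (Dl (t, m) e) (Ef, r1) = Some q1" "snd (Dl (t, m) e) (Ef, r2) = Some q2" "r1 \<noteq> r2" for Ef r1 r2 q1 q2
  proof
    assume eq: "inputs Ef (tau t e, q1) = inputs Ef (tau t e, q2)"
    from that(1)[unfolded Dl_some] obtain p1 where p1: "ext t m (Ef, r1) = Some p1" "fst (sg Ef (t, p1)) = e" "q1 = snd (hh Ef (t, p1))"
      by auto
    from that(2)[unfolded Dl_some] obtain p2 where p2: "ext t m (Ef, r2) = Some p2" "fst (sg Ef (t, p2)) = e" "q2 = snd (hh Ef (t, p2))"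
      by auto
    have "(t, p1) \<in> WW (fst (Ef, r1))" using IE p1(1) unfolding InvM_def by blast
    then have w1: "(t, p1) \<in> WW Ef" by simp
    have "(t, p2) \<in> WW (fst (Ef, r2))" using IE p2(1) unfolding InvM_def by blast
    then have w2: "(t, p2) \<in> WW Ef" by simp
    have "hh Ef (t, p1) = (tau t e, q1)" using hh_pair[OF w1] p1 by simp
    moreover have "hh Ef (t, p2) = (tau t e, q2)" using hh_pair[OF w2] p2 by simp
    ultimately have "inputs Ef (t, p1) = inputs Ef (t, p2)" using inputs_eq[of Ef "(t, p1)" "(t, p2)"] eq p1(2) p2(2) by simp
    then show False using IE p1(1) p2(1) that(3) unfolding InvM_def by blast
  qed
  have "InvM (tau t e) (snd (Dl (t, m) e))" unfolding InvM_def using P1 P2 by auto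
  then show ?thesis unfolding Inv_def using fstD T_closed tT e by simp
qed

lemma cs_prop:
  assumes IM: "InvM t m" and Ef: "Ef \<in> EF" "st t Ef"
  shows "\<exists>q. ext t m (Ef, cs t m Ef) = Some q \<and> acc Ef t (inputs Ef (t, q)) \<and> (Ef, cs t m Ef) \<in> Ds"
proof (cases "reuse m Ef t")
  case True
  then have "\<exists>q. m (Ef, rsl m Ef t) = Some q \<and> acc Ef t (inputs Ef (t, q))"
    unfolding reuse_def rsl_def by (rule someI_ex)
  then obtain q where q: "m (Ef, rsl m Ef t) = Some q" "acc Ef t (inputs Ef (t, q))" by blast
  have "(Ef, rsl m Ef t) \<in> Ds" using IM q(1) unfolding InvM_def by blast
  then show ?thesis using q ext_ext[OF IM q(1)] True unfolding cs_def by auto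
next
  case False
  then have N: "need m Ef t" using Ef unfolding need_def by simp
  have "ext t m (Ef, fsl m Ef) = Some (q0 Ef t)" using N unfolding ext_def by simp
  moreover have "(Ef, fsl m Ef) \<in> Ds" using fsl_prop[OF IM N] Ef(1) unfolding Ds_def by simp
  ultimately show ?thesis using acc_q0[OF Ef] False unfolding cs_def by auto
qed

lemma finite_EF: "finite EF" unfolding EF_def by simp

lemma finite_Ds: "finite Ds"
  unfolding Ds_def using finite_EF nbawf by (intro finite_SigmaI) auto

lemma card_Ds: "card Ds = k"
  unfolding Ds_def kdef EF_def[symmetric] using finite_EF nbawf by (subst card_SigmaI) auto

lemma finite_Inv: "finite {z. Inv z}"
proof -
  define QQ where "QQ = (\<Union>Ef\<in>EF. states (aut Ef))"
  have fQQ: "finite QQ" unfolding QQ_def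
  proof (rule finite_UN_I[OF finite_EF])
    fix Ef assume "Ef \<in> EF" then show "finite (states (aut Ef))" using nbawf by blast
  qed
  define G where "G m = {(x, q). m x = Some q}" for m :: "'a ctl \<times> 's \<Rightarrow> 's option"
  have injG: "inj G"
  proof (rule injI)
    fix m1 m2 assume eq: "G m1 = G m2"
    show "m1 = m2"
    proof (rule ext)
      fix x
      have iff: "m1 x = Some q \<longleftrightarrow> m2 x = Some q" for q
      proof -
        have "(x, q) \<in> G m1 \<longleftrightarrow> (x, q) \<in> G m2" using eq by simp
        then show ?thesis unfolding G_def by simp
      qed
      show "m1 x = m2 x"
      proof (cases "m1 x")
        case None then show ?thesis using iff by (cases "m2 x") auto
      next
        case (Some a) then show ?thesis using iff[of a] by simp
      qed
    qed
  qed
  define Ms where "Ms = {m. \<forall>x q. m x = Some q \<longrightarrow> x \<in> Ds \<and> q \<in> QQ}"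
  have "Ms \<subseteq> G -` Pow (Ds \<times> QQ)"
  proof
    fix m assume m: "m \<in> Ms"
    have "G m \<subseteq> Ds \<times> QQ"
    proof
      fix y assume "y \<in> G m"
      then obtain x q where "y = (x, q)" "m x = Some q" unfolding G_def by blast
      then show "y \<in> Ds \<times> QQ" using m unfolding Ms_def by blast
    qed
    then show "m \<in> G -` Pow (Ds \<times> QQ)" by simp
  qed
  moreover have "finite (G -` Pow (Ds \<times> QQ))"
    using finite_Ds fQQ injG by (intro finite_vimageI) simp_all
  ultimately have fMs: "finite Ms" by (rule finite_subset)
  have "{z. Inv z} \<subseteq> T \<times> Ms"
  proof
    fix z assume "z \<in> {z. Inv z}"
    then have zT: "fst z \<in> T" and IM: "InvM (fst z) (snd z)" unfolding Inv_def by auto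
    have "snd z \<in> Ms" unfolding Ms_def
    proof (intro CollectI allI impI)
      fix x q assume a: "snd z x = Some q"
      then have x: "x \<in> Ds" "q \<in> states (aut (fst x))" using IM unfolding InvM_def by blast+
      then have "fst x \<in> EF" unfolding Ds_def by (cases x) simp
      then have "q \<in> QQ" using x(2) unfolding QQ_def by blast
      then show "x \<in> Ds \<and> q \<in> QQ" using x(1) by simp
    qed
    then show "z \<in> T \<times> Ms" using zT by (simp add: mem_Times_iff)
  qed
  then show ?thesis by (rule finite_subset) (simp add: finT fMs)
qed

definition gg where "gg = (SOME g. bij_betw g Ds {0..<k})"
definition ginv where "ginv = inv_into Ds gg"

lemma gg_bij: "bij_betw gg Ds {0..<k}"
proof -
  obtain h where "bij_betw h Ds {0..<card Ds}" using ex_bij_betw_finite_nat[OF finite_Ds] by blast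
  then have "bij_betw h Ds {0..<k}" using card_Ds by simp
  then show ?thesis unfolding gg_def by (rule someI[of "\<lambda>g. bij_betw g Ds {0..<k}"])
qed

lemma ginv_gg: "x \<in> Ds \<Longrightarrow> ginv (gg x) = x"
  unfolding ginv_def using gg_bij by (simp add: bij_betw_inv_into_left)

definition vout where "vout t m Ef = (if Ef \<in> EF \<and> st t Ef then Suc (gg (Ef, cs t m Ef)) else 0)"
definition dout where "dout t m j = (case ext t m (ginv (j - 1)) of Some q \<Rightarrow> fst (sg (fst (ginv (j - 1))) (t, q)) | None \<Rightarrow> {})"
definition Xout where "Xout z = (out (fst z), vout (fst z) (snd z), (\<lambda>f. st (fst z) f), dout (fst z) (snd z))"

lemma Xout_ok:
  assumes I: "Inv z"
  shows "xout_ok Ins Outs k (Xout z)"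
proof -
  obtain t m where z: "z = (t, m)" by (cases z)
  have tT: "t \<in> T" and IM: "InvM t m" using I z unfolding Inv_def by auto
  have IE: "InvM t (ext t m)" by (rule InvM_ext[OF IM])
  have "vout t m f \<le> k" for f
  proof (cases "f \<in> EF \<and> st t f")
    case True
    then have "(f, cs t m f) \<in> Ds" using cs_prop[OF IM] by blast
    then have "gg (f, cs t m f) < k" using gg_bij unfolding bij_betw_def by auto
    then show ?thesis using True unfolding vout_def by simp
  next
    case False
    then have "vout t m f = 0" unfolding vout_def by (simp only: if_not_P if_False)
    then show ?thesis by simp
  qed
  moreover have "dout t m j \<subseteq> Ins" for j
  proof (cases "ext t m (ginv (j - 1))")
    case (Some q)
    then have "(t, q) \<in> WW (fst (ginv (j - 1)))" using IE unfolding InvM_def by blast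
    then show ?thesis using Some sg_form unfolding dout_def by simp
  qed (simp add: dout_def)
  ultimately show ?thesis using outO tT z unfolding xout_ok_def Xout_def by simp
qed


lemma Inv_Dl': "Inv z \<Longrightarrow> e \<subseteq> Ins \<Longrightarrow> Inv (Dl z e)"
  using Inv_Dl[of "fst z" "snd z" e] by simp

lemma Inv_foldl: "Inv z \<Longrightarrow> \<forall>a\<in>set w. a \<subseteq> Ins \<Longrightarrow> Inv (foldl Dl z w)"
  by (induction w arbitrary: z) (simp_all add: Inv_Dl')

lemma fst_foldl: "fst (foldl Dl z w) = reach tau (fst z) w"
  unfolding reach_def by (induction w arbitrary: z) (simp_all add: Dl_def)

definition z0 where "z0 = (t0, (\<lambda>_. None))"

lemma Inv_z0: "Inv z0"
  unfolding z0_def Inv_def InvM_def using t0T by simp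

definition zs where "zs e i = foldl Dl z0 (map e [0..<i])"

lemma zs_Suc: "zs e (Suc i) = Dl (zs e i) (e i)"
  unfolding zs_def by simp

lemma zs_Inv: "\<forall>j. e j \<subseteq> Ins \<Longrightarrow> Inv (zs e i)"
  unfolding zs_def using Inv_z0 by (intro Inv_foldl) auto

lemma zs_fst: "fst (zs e i) = reach tau t0 (map e [0..<i])"
  unfolding zs_def fst_foldl z0_def by simp

lemma subfs_self: "f \<in> set (subfs f)"
  by (cases f) auto

lemma subfs_trans: "g \<in> set (subfs f) \<Longrightarrow> set (subfs g) \<subseteq> set (subfs f)"
  by (induction f) auto

lemma Hc2_main:
  assumes e: "\<forall>j. e j \<subseteq> Ins"
  shows "Hc2 Ins (LT t0) (set (subfs Phi)) [] e (\<lambda>i. (Xout (zs e i), e i))"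
  unfolding Hc2_def
proof (intro allI conjI impI)
  fix i
  show "fst (fst (Xout (zs e i), e i)) = LT t0 ([] @ map e [0..<i])"
    by (simp add: Xout_def zs_fst LT_def)
  show "snd (Xout (zs e i), e i) = e i" by simp
next
  fix i g assume g: "E g \<in> set (subfs Phi)" "csem Ins (LT t0) (E g) ([] @ map e [0..<i]) e"
  have "E g \<in> EF" using g(1) unfolding EF_def F_exist_def is_E_def by simp
  moreover have "st (fst (zs e i)) (E g)"
    using g(2) csem_LT[of t0 "E g" "map e [0..<i]" e] unfolding st_def zs_fst by simp
  ultimately show "fst (snd (fst (Xout (zs e i), e i))) (E g) \<noteq> 0"
    by (simp add: Xout_def vout_def)
next
  fix i g assume g: "A g \<in> set (subfs Phi)" "csem Ins (LT t0) (A g) ([] @ map e [0..<i]) e"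
  have "st (fst (zs e i)) (A g)"
    using g(2) csem_LT[of t0 "A g" "map e [0..<i]" e] unfolding st_def zs_fst by simp
  then show "fst (snd (snd (fst (Xout (zs e i), e i)))) (A g)"
    by (simp add: Xout_def)
qed

lemma E_conj:
  assumes e: "\<forall>j. e j \<subseteq> Ins" and v: "vout (fst (zs e n)) (snd (zs e n)) Ef = j" "j \<noteq> 0"
    and d: "\<forall>l. e (l + n) = dout (fst (zs e (l + n))) (snd (zs e (l + n))) j"
  shows "acc Ef (fst (zs e n)) (\<lambda>l. e (l + n))"
proof -
  define t where "t = fst (zs e n)"
  define m where "m = snd (zs e n)"
  have znm: "zs e n = (t, m)" unfolding t_def m_def by simp
  have IM: "InvM t m" using zs_Inv[OF e, of n] znm unfolding Inv_def by simp
  have Ef: "Ef \<in> EF" "st t Ef" and j: "j = Suc (gg (Ef, cs t m Ef))"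
    using v unfolding t_def m_def vout_def by (auto split: if_splits)
  define x where "x = (Ef, cs t m Ef)"
  obtain q where q: "ext t m x = Some q" "acc Ef t (inputs Ef (t, q))" "x \<in> Ds"
    using cs_prop[OF IM Ef] unfolding x_def by blast
  have gx: "ginv (j - 1) = x" using ginv_gg[OF q(3)] j x_def by simp
  have tqW: "(t, q) \<in> WW Ef" using InvM_ext[OF IM] q(1) unfolding InvM_def x_def by fastforce
  define V where "V l = (hh Ef ^^ l) (t, q)" for l
  have VW: "V l \<in> WW Ef" for l unfolding V_def by (rule hh_stay[OF tqW])
  have claim: "ext (fst (zs e (l + n))) (snd (zs e (l + n))) x = Some (snd (V l)) \<and> fst (V l) = fst (zs e (l + n))" for l
  proof (induction l)
    case 0 then show ?case using q(1) znm by (simp add: V_def)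
  next
    case (Suc l)
    define t' where "t' = fst (zs e (l + n))"
    define m' where "m' = snd (zs e (l + n))"
    have z': "zs e (l + n) = (t', m')" unfolding t'_def m'_def by simp
    have IH: "ext t' m' x = Some (snd (V l))" "fst (V l) = t'" using Suc unfolding t'_def m'_def by auto
    have Vl: "V l = (t', snd (V l))" using IH(2) by (metis prod.collapse)
    have el: "e (l + n) = fst (sg Ef (V l))"
      using d IH(1) gx Vl unfolding dout_def t'_def m'_def x_def by (metis fst_conv option.simps(5))
    have zS: "zs e (Suc l + n) = Dl (t', m') (e (l + n))" using zs_Suc[of e "l + n"] z' by simp
    have "snd (Dl (t', m') (e (l + n))) x = Some (snd (hh Ef (V l)))"
      unfolding Dl_some using IH(1) el Vl x_def by (metis fst_conv)
    moreover have "InvM (fst (zs e (Suc l + n))) (snd (zs e (Suc l + n)))"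
      using zs_Inv[OF e] unfolding Inv_def by blast
    ultimately have A1: "ext (fst (zs e (Suc l + n))) (snd (zs e (Suc l + n))) x = Some (snd (V (Suc l)))"
      using ext_ext zS unfolding V_def by (simp only: funpow.simps o_apply)
    have "fst (hh Ef (V l)) = tau t' (fst (sg Ef (V l)))" using hh_pair[OF VW[of l]] Vl by (metis fst_conv)
    then have "fst (V (Suc l)) = fst (zs e (Suc l + n))"
      using zS el unfolding V_def by (simp add: Dl_def)
    then show ?case using A1 by simp
  qed
  have "inputs Ef (t, q) l = e (l + n)" for l
  proof -
    have c: "ext (fst (zs e (l + n))) (snd (zs e (l + n))) x = Some (snd (V l))" "fst (V l) = fst (zs e (l + n))"
      using claim by auto
    have "V l = (fst (zs e (l + n)), snd (V l))" using c(2) by (metis prod.collapse)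
    then show ?thesis using d c(1) gx unfolding dout_def inputs_def V_def x_def by (metis fst_conv option.simps(5))
  qed
  then have "(\<lambda>l. e (l + n)) = inputs Ef (t, q)" by auto
  then show ?thesis using q(2) t_def by simp
qed


definition ZZ where "ZZ = {z. Inv z}"
definition enc where "enc = (SOME h. bij_betw h ZZ {0..<card ZZ})"
definition dec where "dec = inv_into ZZ enc"
definition tau2 where "tau2 n e = enc (Dl (dec n) e)"
definition out2 where "out2 n = Xout (dec n)"

lemma enc_bij: "bij_betw enc ZZ {0..<card ZZ}"
proof -
  have "finite ZZ" unfolding ZZ_def by (rule finite_Inv)
  then obtain h where "bij_betw h ZZ {0..<card ZZ}" using ex_bij_betw_finite_nat by blast
  then show ?thesis unfolding enc_def by (rule someI[of "\<lambda>h. bij_betw h ZZ {0..<card ZZ}"])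
qed

lemma dec_enc: "z \<in> ZZ \<Longrightarrow> dec (enc z) = z"
  unfolding dec_def using enc_bij by (simp add: bij_betw_inv_into_left)

lemma dec_in: "n \<in> {0..<card ZZ} \<Longrightarrow> dec n \<in> ZZ"
  unfolding dec_def using bij_betw_inv_into[OF enc_bij] by (rule bij_betw_apply)

lemma enc_in: "z \<in> ZZ \<Longrightarrow> enc z \<in> {0..<card ZZ}"
  using enc_bij by (rule bij_betw_apply)

lemma moore2: "moore Ins (xout_ok Ins Outs k) {0..<card ZZ} (enc z0) tau2 out2"
  unfolding moore_def
proof (intro conjI ballI allI impI)
  show "finite {0..<card ZZ}" by simp
  show "enc z0 \<in> {0..<card ZZ}" using enc_in Inv_z0 unfolding ZZ_def by simp
next
  fix n e assume n: "n \<in> {0..<card ZZ}" and e: "e \<subseteq> Ins"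
  have "Inv (dec n)" using dec_in[OF n] unfolding ZZ_def by simp
  then have "Dl (dec n) e \<in> ZZ" using Inv_Dl' e unfolding ZZ_def by simp
  then show "tau2 n e \<in> {0..<card ZZ}" unfolding tau2_def by (rule enc_in)
next
  fix n assume n: "n \<in> {0..<card ZZ}"
  have "Inv (dec n)" using dec_in[OF n] unfolding ZZ_def by simp
  then show "xout_ok Ins Outs k (out2 n)" unfolding out2_def by (rule Xout_ok)
qed

lemma reach2: "\<forall>a\<in>set w. a \<subseteq> Ins \<Longrightarrow> reach tau2 (enc z0) w = enc (foldl Dl z0 w)"
proof (induction w rule: rev_induct)
  case Nil then show ?case by (simp add: reach_def)
next
  case (snoc a w)
  have I: "foldl Dl z0 w \<in> ZZ" using Inv_foldl[OF Inv_z0] snoc.prems unfolding ZZ_def by simp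
  have IH: "reach tau2 (enc z0) w = enc (foldl Dl z0 w)" using snoc by simp
  have "reach tau2 (enc z0) (w @ [a]) = tau2 (reach tau2 (enc z0) w) a" by (simp add: reach_def)
  also have "\<dots> = enc (Dl (foldl Dl z0 w) a)" unfolding IH tau2_def using I by (simp add: dec_enc)
  finally show ?case by simp
qed

lemma comp2: "\<forall>j. e j \<subseteq> Ins \<Longrightarrow> computation tau2 (enc z0) out2 e = (\<lambda>i. (Xout (zs e i), e i))"
proof (rule ext)
  fix i assume e: "\<forall>j. e j \<subseteq> Ins"
  have "reach tau2 (enc z0) (map e [0..<i]) = enc (zs e i)" unfolding zs_def using e by (intro reach2) auto
  moreover have "zs e i \<in> ZZ" using zs_Inv[OF e] unfolding ZZ_def by simp
  ultimately show "computation tau2 (enc z0) out2 e i = (Xout (zs e i), e i)"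
    unfolding computation_def out2_def by (simp add: dec_enc)
qed

lemma dir2_main: "ltl_realisable Ins Outs k (Phi_LTL k Phi)"
  unfolding ltl_realisable_def
proof (intro exI conjI allI impI)
  show "moore Ins (xout_ok Ins Outs k) {0..<card ZZ} (enc z0) tau2 out2" by (rule moore2)
  fix e :: "nat \<Rightarrow> 'a set" assume e: "\<forall>j. e j \<subseteq> Ins"
  define c where "c = (\<lambda>i. (Xout (zs e i), e i))"
  have H: "Hc2 Ins (LT t0) (set (subfs Phi)) [] e c" unfolding c_def by (rule Hc2_main[OF e])
  have Hn: "Hc2 Ins (LT t0) (set (subfs Phi)) (map e [0..<n]) (\<lambda>j. e (j + n)) (\<lambda>i. c (i + n))" for n
    using Hc2_shift[OF H, of n] by simp
  have P1: "lsem lprop_sem (prime Phi) c"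
  proof (rule C2P[OF H subset_refl])
    have "LT t0 = (\<lambda>w. out (reach tau t0 w))" by (rule ext) (simp add: LT_def)
    then show "csem Ins (LT t0) Phi [] e" using sat csem_state[OF isst] by metis
  qed
  have P2: "lsem lprop_sem (prime (body Ef)) (\<lambda>i. c (i + n))"
    if Ef: "Ef \<in> EF" and j: "j \<noteq> 0" and v: "vout (fst (zs e n)) (snd (zs e n)) Ef = j"
       and d: "\<forall>l. e (l + n) = dout (fst (zs e (l + n))) (snd (zs e (l + n))) j" for Ef j n
  proof -
    have "acc Ef (fst (zs e n)) (\<lambda>l. e (l + n))" by (rule E_conj[OF e v j d])
    then have "csem Ins (LT (fst (zs e n))) (body Ef) [] (\<lambda>l. e (l + n))" using acc_csem[OF Ef] by simp
    then have cs: "csem Ins (LT t0) (body Ef) (map e [0..<n]) (\<lambda>l. e (l + n))"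
      using csem_LT[of t0 "body Ef" "map e [0..<n]"] zs_fst by simp
    obtain g where g: "Ef = E g" using EF_E[OF Ef] by blast
    have "Ef \<in> set (subfs Phi)" using Ef unfolding EF_def F_exist_def by simp
    then have "set (subfs (body Ef)) \<subseteq> set (subfs Phi)" using subfs_trans[of Ef Phi] g by simp
    then show ?thesis using C2P[OF Hn _ cs] by blast
  qed
  have P3: "lsem lprop_sem (prime g) (\<lambda>i. c (i + n))"
    if g: "A g \<in> set (subfs Phi)" and p: "st (fst (zs e n)) (A g)" for g n
  proof -
    have "csem Ins (LT (fst (zs e n))) g [] (\<lambda>l. e (l + n))" using p e unfolding st_def by simp
    then have cs: "csem Ins (LT t0) g (map e [0..<n]) (\<lambda>l. e (l + n))"
      using csem_LT[of t0 g "map e [0..<n]"] zs_fst by simp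
    have "set (subfs g) \<subseteq> set (subfs Phi)" using subfs_trans[OF g] by simp
    then show ?thesis using C2P[OF Hn _ cs] by blast
  qed
  show "lsem lprop_sem (Phi_LTL k Phi) (computation tau2 (enc z0) out2 e)"
    unfolding comp2[OF e] c_def[symmetric] Phi_LTL_def
  proof (simp only: lsem.simps lsem_LConj, intro conjI ballI)
    show "lsem lprop_sem (prime Phi) c" by (rule P1)
  next
    fix x assume "x \<in> set (concat (map (\<lambda>Ef. map (\<lambda>j. LG (LImp (LAtom (LV Ef j)) (LImp (LG (LAtom (LD j))) (prime (body Ef))))) [1..<Suc k]) (F_exist Phi)))"
    then have "\<exists>Ef\<in>set (F_exist Phi). \<exists>j\<in>set [1..<Suc k].
       x = LG (LImp (LAtom (LV Ef j)) (LImp (LG (LAtom (LD j))) (prime (body Ef))))" by auto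
    then obtain Ef j where Ef0: "Ef \<in> set (F_exist Phi)" and j0: "j \<in> set [1..<Suc k]" and
       x: "x = LG (LImp (LAtom (LV Ef j)) (LImp (LG (LAtom (LD j))) (prime (body Ef))))"
      by blast
    have Ef: "Ef \<in> EF" using Ef0 unfolding EF_def .
    have j: "j \<noteq> 0" using j0 by auto
    show "lsem lprop_sem x c" unfolding x lsem_LG lsem_LImp
    proof (intro allI impI)
      fix n
      assume a1: "lsem lprop_sem (LAtom (LV Ef j)) (\<lambda>i. c (i + n))"
         and a2: "\<forall>k. lsem lprop_sem (LAtom (LD j)) (\<lambda>i. c (i + k + n))"
      have v: "vout (fst (zs e n)) (snd (zs e n)) Ef = j" using a1 by (simp add: lprop_sem_simps c_def Xout_def)
      have d: "\<forall>l. e (l + n) = dout (fst (zs e (l + n))) (snd (zs e (l + n))) j"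
        using a2 by (simp add: lprop_sem_simps c_def Xout_def)
      show "lsem lprop_sem (prime (body Ef)) (\<lambda>i. c (i + n))" by (rule P2[OF Ef j v d])
    qed
  next
    fix x assume "x \<in> set (map (\<lambda>Af. LG (LImp (LAtom (LP Af)) (prime (body Af)))) (F_univ Phi))"
    then obtain g where g: "A g \<in> set (subfs Phi)" and x: "x = LG (LImp (LAtom (LP (A g))) (prime g))"
      unfolding F_univ_def is_A_def by auto
    show "lsem lprop_sem x c" unfolding x lsem_LG lsem_LImp
    proof (intro allI impI)
      fix n
      assume a1: "lsem lprop_sem (LAtom (LP (A g))) (\<lambda>i. c (i + n))"
      have "st (fst (zs e n)) (A g)" using a1 by (simp add: lprop_sem_simps c_def Xout_def)
      then show "lsem lprop_sem (prime g) (\<lambda>i. c (i + n))" by (rule P3[OF g])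
    qed
  qed
qed

end

definition ful :: "'a set list \<Rightarrow> (nat \<Rightarrow> 'a set) \<Rightarrow> nat \<Rightarrow> 'a set" where
  "ful w e i = (if i < length w then w ! i else e (i - length w))"

lemma map_ful: "map (ful w e) [0..<i + length w] = w @ map e [0..<i]"
proof -
  have "map (ful w e) [0..<length w] = w"
    by (rule nth_equalityI) (simp_all add: ful_def)
  moreover have "map (\<lambda>j. ful w e (j + length w)) [0..<i] = map e [0..<i]"
    by (simp add: ful_def)
  ultimately show ?thesis by (simp add: map_upt_shift)
qed

lemma ful_valid: "\<forall>a\<in>set w. a \<subseteq> Ins \<Longrightarrow> \<forall>j. e j \<subseteq> Ins \<Longrightarrow> \<forall>j. ful w e j \<subseteq> Ins"
  unfolding ful_def by (auto simp: nth_mem)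

lemma xout_ok_iff: "xout_ok Ins Outs k x \<longleftrightarrow> fst x \<subseteq> Outs \<and> (\<forall>f. fst (snd x) f \<le> k) \<and> (\<forall>j. snd (snd (snd x)) j \<subseteq> Ins)"
  by (cases x) (auto simp: xout_ok_def)

lemma ful_at: "ful w e (i + length w) = e i"
  by (simp add: ful_def)

lemma dir1:
  assumes fr: "ltl_realisable Ins Outs k (Phi_LTL k Phi)"
  shows "ctl_realisable Ins Outs Phi"
proof -
  obtain T t0 tau out where moo: "moore Ins (xout_ok Ins Outs k) T t0 tau out"
    and sat: "\<forall>e. (\<forall>j. e j \<subseteq> Ins) \<longrightarrow> lsem lprop_sem (Phi_LTL k Phi) (computation tau t0 out e)"
    using fr unfolding ltl_realisable_def by blast
  have Tc: "\<forall>t\<in>T. \<forall>e. e \<subseteq> Ins \<longrightarrow> tau t e \<in> T" and t0T: "t0 \<in> T" and okT: "\<forall>t\<in>T. xout_ok Ins Outs k (out t)"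
    using moo unfolding moore_def by auto
  define L where "L w = fst (out (reach tau t0 w))" for w
  define vv where "vv w = fst (snd (out (reach tau t0 w)))" for w
  define pp where "pp w = fst (snd (snd (out (reach tau t0 w))))" for w
  define dd' where "dd' t = snd (snd (snd (out t)))" for t
  have rT: "reach tau t0 w \<in> T" if "\<forall>a\<in>set w. a \<subseteq> Ins" for w using reach_in[OF t0T Tc that] .
  define GE where "GE g \<longleftrightarrow> (\<forall>w. (\<forall>a\<in>set w. a \<subseteq> Ins) \<longrightarrow> vv w (E g) \<noteq> 0 \<longrightarrow> csem Ins L (E g) w (\<lambda>_. {}))" for g
  define GA where "GA g \<longleftrightarrow> (\<forall>w. (\<forall>a\<in>set w. a \<subseteq> Ins) \<longrightarrow> pp w (A g) \<longrightarrow> csem Ins L (A g) w (\<lambda>_. {}))" for g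
  have comp: "computation tau t0 out (ful w e) (i + length w) = (out (reach tau t0 (w @ map e [0..<i])), e i)" for w e i
    unfolding computation_def by (simp add: map_ful ful_at)
  have HcL: "Hc Ins L Sub w e (\<lambda>i. computation tau t0 out (ful w e) (i + length w))"
    if G: "\<forall>g. E g \<in> Sub \<longrightarrow> GE g" "\<forall>g. A g \<in> Sub \<longrightarrow> GA g"
      and w: "\<forall>a\<in>set w. a \<subseteq> Ins" and e: "\<forall>j. e j \<subseteq> Ins" for Sub w e
    unfolding Hc_def comp
  proof (intro allI conjI impI)
    fix i
    show "fst (fst (out (reach tau t0 (w @ map e [0..<i])), e i)) = L (w @ map e [0..<i])" by (simp add: L_def)
    show "snd (out (reach tau t0 (w @ map e [0..<i])), e i) = e i" by simp
  next
    fix i g assume a: "E g \<in> Sub" "fst (snd (fst (out (reach tau t0 (w @ map e [0..<i])), e i))) (E g) \<noteq> 0"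
    have "\<forall>a\<in>set (w @ map e [0..<i]). a \<subseteq> Ins" using w e by auto
    then show "csem Ins L (E g) (w @ map e [0..<i]) e"
      using G(1) a unfolding GE_def vv_def by simp
  next
    fix i g assume a: "A g \<in> Sub" "fst (snd (snd (fst (out (reach tau t0 (w @ map e [0..<i])), e i)))) (A g)"
    have "\<forall>a\<in>set (w @ map e [0..<i]). a \<subseteq> Ins" using w e by auto
    then show "csem Ins L (A g) (w @ map e [0..<i]) e"
      using G(2) a unfolding GA_def pp_def by simp
  qed
  have satc: "lsem lprop_sem (Phi_LTL k Phi) (computation tau t0 out (ful w e))"
    if w: "\<forall>a\<in>set w. a \<subseteq> Ins" and e: "\<forall>j. e j \<subseteq> Ins" for w e
    using sat ful_valid[OF w e] by blast
  have main: "set (subfs f) \<subseteq> set (subfs Phi) \<Longrightarrow> (\<forall>g. E g \<in> set (subfs f) \<longrightarrow> GE g) \<and> (\<forall>g. A g \<in> set (subfs f) \<longrightarrow> GA g)" for f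
  proof (induction f)
    case (A g)
    have IH: "\<forall>h. E h \<in> set (subfs g) \<longrightarrow> GE h" "\<forall>h. A h \<in> set (subfs g) \<longrightarrow> GA h" using A by auto
    have "GA g" unfolding GA_def
    proof (intro allI impI)
      fix w assume w: "\<forall>a\<in>set w. a \<subseteq> Ins" and p: "pp w (A g)"
      show "csem Ins L (A g) w (\<lambda>_. {})"
      proof (simp only: csem.simps, intro allI impI)
        fix e :: "nat \<Rightarrow> 'a set" assume e: "\<forall>j. e j \<subseteq> Ins"
        define c where "c = computation tau t0 out (ful w e)"
        have "A g \<in> set (F_univ Phi)" using A.prems unfolding F_univ_def is_A_def by simp
        then have "lsem lprop_sem (LG (LImp (LAtom (LP (A g))) (prime g))) c"
          using satc[OF w e] unfolding c_def Phi_LTL_def by (simp only: lsem.simps lsem_LConj) force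
        then have "lsem lprop_sem (LAtom (LP (A g))) (\<lambda>i. c (i + length w)) \<longrightarrow> lsem lprop_sem (prime g) (\<lambda>i. c (i + length w))"
          unfolding lsem_LG lsem_LImp by blast
        moreover have "lsem lprop_sem (LAtom (LP (A g))) (\<lambda>i. c (i + length w))"
          using p comp[of w e 0] unfolding c_def pp_def by (simp add: lprop_sem_simps)
        ultimately have "lsem lprop_sem (prime g) (\<lambda>i. c (i + length w))" by blast
        then show "csem Ins L g w e" using P2C[OF HcL[OF IH w e] subset_refl] unfolding c_def by blast
      qed
    qed
    then show ?case using IH by auto
  next
    case (E g)
    have IH: "\<forall>h. E h \<in> set (subfs g) \<longrightarrow> GE h" "\<forall>h. A h \<in> set (subfs g) \<longrightarrow> GA h" using E by auto
    have "GE g" unfolding GE_def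
    proof (intro allI impI)
      fix w assume w: "\<forall>a\<in>set w. a \<subseteq> Ins" and v: "vv w (E g) \<noteq> 0"
      define j where "j = vv w (E g)"
      have jk: "j \<le> k" using okT rT[OF w] unfolding j_def vv_def xout_ok_iff by auto
      define sq where "sq = rec_nat (reach tau t0 w) (\<lambda>_ t. tau t (dd' t j))"
      have sq0: "sq 0 = reach tau t0 w" and sqS: "sq (Suc i) = tau (sq i) (dd' (sq i) j)" for i
        unfolding sq_def by simp_all
      define e where "e (i::nat) = dd' (sq i) j" for i
      have sqT: "sq i \<in> T" for i
      proof (induction i)
        case 0 then show ?case using sq0 rT[OF w] by simp
      next
        case (Suc i)
        have "dd' (sq i) j \<subseteq> Ins" using okT Suc unfolding dd'_def xout_ok_iff by auto
        then show ?case using Tc Suc sqS by simp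
      qed
      have e: "\<forall>i. e i \<subseteq> Ins" using okT sqT unfolding e_def dd'_def xout_ok_iff by auto
      have sqr: "reach tau t0 (w @ map e [0..<i]) = sq i" for i
      proof (induction i)
        case 0 then show ?case using sq0 by simp
      next
        case (Suc i) then show ?case using sqS by (simp add: reach_def e_def)
      qed
      define c where "c = computation tau t0 out (ful w e)"
      have "E g \<in> set (F_exist Phi)" using E.prems unfolding F_exist_def is_E_def by simp
      moreover have "j \<in> set [1..<Suc k]" using jk v j_def by auto
      ultimately have "lsem lprop_sem (LG (LImp (LAtom (LV (E g) j)) (LImp (LG (LAtom (LD j))) (prime g)))) c"
        using satc[OF w e] unfolding c_def Phi_LTL_def by (simp only: lsem.simps lsem_LConj) force
      then have imp: "lsem lprop_sem (LAtom (LV (E g) j)) (\<lambda>i. c (i + length w)) \<longrightarrow>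
          lsem lprop_sem (LG (LAtom (LD j))) (\<lambda>i. c (i + length w)) \<longrightarrow> lsem lprop_sem (prime g) (\<lambda>i. c (i + length w))"
        unfolding lsem_LG[of _ "LImp _ _"] lsem_LImp by blast
      have "lsem lprop_sem (LAtom (LV (E g) j)) (\<lambda>i. c (i + length w))"
        using comp[of w e 0] unfolding c_def j_def vv_def by (simp add: lprop_sem_simps)
      moreover have "lsem lprop_sem (LG (LAtom (LD j))) (\<lambda>i. c (i + length w))"
        unfolding lsem_LG
      proof
        fix l
        have "c (l + length w) = (out (sq l), e l)" using comp[of w e l] sqr unfolding c_def by simp
        then show "lsem lprop_sem (LAtom (LD j)) (\<lambda>i. c (i + l + length w))"
          by (simp add: lprop_sem_simps e_def dd'_def)
      qed
      ultimately have "lsem lprop_sem (prime g) (\<lambda>i. c (i + length w))" using imp by blast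
      then have "csem Ins L g w e" using P2C[OF HcL[OF IH w e] subset_refl] unfolding c_def by blast
      then show "csem Ins L (E g) w (\<lambda>_. {})" using e by auto
    qed
    then show ?case using IH by auto
  qed auto
  have G: "\<forall>g. E g \<in> set (subfs Phi) \<longrightarrow> GE g" "\<forall>g. A g \<in> set (subfs Phi) \<longrightarrow> GA g"
    using main[OF subset_refl] by auto
  define e0 where "e0 = (\<lambda>_::nat. {} :: 'a set)"
  have e0: "\<forall>j. e0 j \<subseteq> Ins" by (simp add: e0_def)
  have "lsem lprop_sem (prime Phi) (computation tau t0 out (ful [] e0))"
    using satc[of "[]" e0] e0 unfolding Phi_LTL_def by simp
  then have "csem Ins L Phi [] e0" using P2C[OF HcL[OF G _ e0, of "[]"] subset_refl] by simp
  moreover have "moore Ins (\<lambda>s. s \<subseteq> Outs) T t0 tau (\<lambda>t. fst (out t))"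
    using moo unfolding moore_def xout_ok_iff by auto
  ultimately show ?thesis unfolding ctl_realisable_def L_def e0_def by blast
qed


theorem mainTheorem5:
  fixes Ins Outs :: "'a set" and Phi :: "'a ctl" and aut :: "'a ctl \<Rightarrow> ('s, 'a ctl set) nba"
  assumes "finite Ins" and "finite Outs" and "Ins \<inter> Outs = {}"
    and "is_state Phi" and "over Ins Outs Phi"
    and "\<forall>Ef \<in> set (F_exist Phi). nba_for (aut Ef) (body Ef)"
    and "k = (\<Sum>Ef \<in> set (F_exist Phi). card (states (aut Ef)))"
  shows "ctl_realisable Ins Outs Phi \<longleftrightarrow> ltl_realisable Ins Outs k (Phi_LTL k Phi)"
proof
  assume "ctl_realisable Ins Outs Phi"
  then obtain T t0 tau out where m: "moore Ins (\<lambda>s. s \<subseteq> Outs) T t0 tau out"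
      and s: "csem Ins (\<lambda>w. out (reach tau t0 w)) Phi [] (\<lambda>_. {})"
    unfolding ctl_realisable_def by blast
  interpret d: dir2 Ins Outs Phi aut k T t0 tau out
    using m s assms(4,6,7) by unfold_locales auto
  show "ltl_realisable Ins Outs k (Phi_LTL k Phi)" by (rule d.dir2_main)
next
  assume "ltl_realisable Ins Outs k (Phi_LTL k Phi)"
  then show "ctl_realisable Ins Outs Phi" by (rule dir1)
qed

end
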